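(* Fix $\alpha,\beta>0$. For $n\ge2$ let $S$ be a random $\alpha/\beta$-staircase tableau of size $n$ with law $\mathbb{P}_{n,\alpha,\beta}$, and let $X_n$ be the number of non-empty boxes among the boxes $(n-j,j)$, $1\le j\le n-1$ (the second main diagonal). Then, as $n\to\infty$, $X_n$ converges in distribution to a Poisson random variable with parameter $1$.
   Context: A staircase tableau of size $n$ has boxes $(i,j)$ with $i,j\ge1$ and $i+j\le n+1$, rows numbered from the top and columns from the left. An $\alpha/\beta$-staircase tableau of size $n$ is a filling in which each box is empty or contains $\alpha$ or $\beta$, such that: all boxes in the same column and above an $\alpha$ are empty; all boxes in the same row and to the left of a $\beta$ are empty; every main-diagonal box (with $i+j=n+1$) contains a symbol. $\overline{\mathcal{S}}_n$ is the set of these. The weight is $wt(S)=\alpha^{N_\alpha}\beta^{N_\beta}$ ($N_\alpha,N_\beta$ the numbers of $\alpha$'s, $\beta$'s), and $\mathbb{P}_{n,\alpha,\beta}(S)=wt(S)/\sum_{T\in\overline{\mathcal{S}}_n}wt(T)$. *)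

theory Defs
  imports "HOL-Probability.Probability"
begin

datatype sym = Alpha | Beta

text \<open>Boxes of the staircase of size n: (i,j) with i,j >= 1 and i+j <= n+1
  (i = row from the top, j = column from the left).\<close>
definition boxes :: "nat \<Rightarrow> (nat \<times> nat) set" where
  "boxes n = {(i, j). 1 \<le> i \<and> 1 \<le> j \<and> i + j \<le> n + 1}"

definition staircase :: "nat \<Rightarrow> (nat \<times> nat \<Rightarrow> sym option) set" where
  "staircase n = {S.
     (\<forall>p. p \<notin> boxes n \<longrightarrow> S p = None) \<and>
     (\<forall>i j i'. S (i, j) = Some Alpha \<and> 1 \<le> i' \<and> i' < i \<longrightarrow> S (i', j) = None) \<and>
     (\<forall>i j j'. S (i, j) = Some Beta \<and> 1 \<le> j' \<and> j' < j \<longrightarrow> S (i, j') = None) \<and>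
     (\<forall>i j. (i, j) \<in> boxes n \<and> i + j = n + 1 \<longrightarrow> S (i, j) \<noteq> None)}"

definition N_alpha :: "(nat \<times> nat \<Rightarrow> sym option) \<Rightarrow> nat" where
  "N_alpha S = card {p. S p = Some Alpha}"

definition N_beta :: "(nat \<times> nat \<Rightarrow> sym option) \<Rightarrow> nat" where
  "N_beta S = card {p. S p = Some Beta}"

definition wt :: "real \<Rightarrow> real \<Rightarrow> (nat \<times> nat \<Rightarrow> sym option) \<Rightarrow> real" where
  "wt a b S = a ^ N_alpha S * b ^ N_beta S"

definition staircase_pmf :: "nat \<Rightarrow> real \<Rightarrow> real \<Rightarrow> (nat \<times> nat \<Rightarrow> sym option) pmf" where
  "staircase_pmf n a b = embed_pmf (\<lambda>S. if S \<in> staircase n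
      then wt a b S / (\<Sum>T\<in>staircase n. wt a b T) else 0)"

definition X :: "nat \<Rightarrow> (nat \<times> nat \<Rightarrow> sym option) \<Rightarrow> nat" where
  "X n S = card {j \<in> {1..n-1}. S (n - j, j) \<noteq> None}"

definition X_law :: "nat \<Rightarrow> real \<Rightarrow> real \<Rightarrow> real measure" where
  "X_law n a b = distr (measure_pmf (staircase_pmf n a b)) borel (\<lambda>S. real (X n S))"

end

theory Submission
  imports Defs "HOL-Real_Asymp.Real_Asymp"
begin


type_synonym tab = "nat \<times> nat \<Rightarrow> sym option"

lemma finite_boxes: "finite (boxes n)"
proof -
  have "boxes n \<subseteq> {1..n+1} \<times> {1..n+1}" by (auto simp: boxes_def)
  then show ?thesis by (rule finite_subset) auto
qed

definition opts :: "sym option set" where "opts = {None, Some Alpha, Some Beta}"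

lemma opts_all: "x \<in> opts"
proof (cases x)
  case (Some s) then show ?thesis by (cases s) (auto simp: opts_def)
qed (auto simp: opts_def)

lemma finite_opts: "finite opts" by (simp add: opts_def)

lemma finite_supp_funs: "finite A \<Longrightarrow> finite {f :: 'a \<Rightarrow> sym option. \<forall>x. x \<notin> A \<longrightarrow> f x = None}"
  using finite_set_of_finite_funs[of A opts None] by (simp add: opts_all finite_opts)

lemma finite_staircase: "finite (staircase n)"
  by (rule finite_subset[OF _ finite_supp_funs[OF finite_boxes[of n]]]) (auto simp: staircase_def)

lemma staircase_D:
  assumes "T \<in> staircase n"
  shows "(\<forall>p. p \<notin> boxes n \<longrightarrow> T p = None) \<and>
     (\<forall>i j i'. T (i, j) = Some Alpha \<and> 1 \<le> i' \<and> i' < i \<longrightarrow> T (i', j) = None) \<and>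
     (\<forall>i j j'. T (i, j) = Some Beta \<and> 1 \<le> j' \<and> j' < j \<longrightarrow> T (i, j') = None) \<and>
     (\<forall>i j. (i, j) \<in> boxes n \<and> i + j = n + 1 \<longrightarrow> T (i, j) \<noteq> None)"
  using assms unfolding staircase_def by (rule CollectD)

lemma staircase_out: "T \<in> staircase n \<Longrightarrow> p \<notin> boxes n \<Longrightarrow> T p = None"
  using staircase_D[of T n] by blast
lemma staircase_alpha: "T \<in> staircase n \<Longrightarrow> T (i,j) = Some Alpha \<Longrightarrow> 1 \<le> i' \<Longrightarrow> i' < i \<Longrightarrow> T (i',j) = None"
  using staircase_D[of T n] by blast
lemma staircase_beta: "T \<in> staircase n \<Longrightarrow> T (i,j) = Some Beta \<Longrightarrow> 1 \<le> j' \<Longrightarrow> j' < j \<Longrightarrow> T (i,j') = None"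
  using staircase_D[of T n] by blast
lemma staircase_diag: "T \<in> staircase n \<Longrightarrow> (i,j) \<in> boxes n \<Longrightarrow> i + j = n + 1 \<Longrightarrow> T (i,j) \<noteq> None"
  using staircase_D[of T n] by blast

definition glue :: "(nat \<Rightarrow> sym option) \<Rightarrow> tab \<Rightarrow> tab" where
  "glue c T = (\<lambda>(i,j). if j = 0 then None else if j = 1 then c i else T (i, j - 1))"
definition unglue :: "tab \<Rightarrow> tab" where
  "unglue T = (\<lambda>(i,j). if j = 0 then None else T (i, Suc j))"
definition col :: "tab \<Rightarrow> nat \<Rightarrow> sym option" where
  "col T = (\<lambda>i. T (i, 1))"
definition free :: "nat \<Rightarrow> tab \<Rightarrow> nat set" where
  "free n T = {i \<in> {1..n}. \<forall>j. T (i,j) \<noteq> Some Beta}"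
definition colset :: "nat \<Rightarrow> nat set \<Rightarrow> (nat \<Rightarrow> sym option) set" where
  "colset n F = {c. (\<forall>i. i \<notin> insert n F \<longrightarrow> c i = None) \<and> c n \<noteq> None \<and>
      (\<forall>i i'. c i = Some Alpha \<and> i' < i \<longrightarrow> c i' = None)}"

lemma glue_in:
  assumes T: "T \<in> staircase n" and c: "c \<in> colset (Suc n) (free n T)"
  shows "glue c T \<in> staircase (Suc n)"
proof -
  let ?G = "glue c T"
  have out: "?G p = None" if "p \<notin> boxes (Suc n)" for p
  proof -
    obtain i j where p: "p = (i,j)" by (cases p)
    show ?thesis
    proof (cases "j = 0")
      case False
      show ?thesis
      proof (cases "j = 1")
        case True
        then have "i \<notin> insert (Suc n) (free n T)" using that p by (auto simp: boxes_def free_def)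
        then show ?thesis using c True p by (auto simp: glue_def colset_def)
      next
        case False
        then have "(i, j - 1) \<notin> boxes n" using that p \<open>j \<noteq> 0\<close> by (auto simp: boxes_def)
        then show ?thesis using staircase_out[OF T] False \<open>j \<noteq> 0\<close> p by (auto simp: glue_def)
      qed
    qed (simp add: glue_def p)
  qed
  have al: "?G (i', j) = None" if "?G (i, j) = Some Alpha" "1 \<le> i'" "i' < i" for i j i'
  proof -
    have j0: "j \<noteq> 0" using that by (auto simp: glue_def split: if_splits)
    show ?thesis
    proof (cases "j = 1")
      case True then show ?thesis using c that by (auto simp: glue_def colset_def)
    next
      case False
      then have "T (i, j-1) = Some Alpha" using that j0 by (auto simp: glue_def)
      then have "T (i', j-1) = None" using staircase_alpha[OF T _ that(2,3)] by simp
      then show ?thesis using False j0 by (auto simp: glue_def)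
    qed
  qed
  have be: "?G (i, j') = None" if "?G (i, j) = Some Beta" "1 \<le> j'" "j' < j" for i j j'
  proof -
    have j1: "j \<ge> 2" using that by (auto simp: glue_def split: if_splits)
    then have Tb: "T (i, j-1) = Some Beta" using that by (auto simp: glue_def)
    show ?thesis
    proof (cases "j' = 1")
      case True
      have "i \<notin> free n T" using Tb by (auto simp: free_def)
      moreover have "i \<noteq> Suc n"
      proof
        assume "i = Suc n"
        then have "(i, j-1) \<notin> boxes n" using j1 by (auto simp: boxes_def)
        then show False using staircase_out[OF T] Tb by simp
      qed
      ultimately show ?thesis using c True by (auto simp: glue_def colset_def)
    next
      case False
      have "1 \<le> j'-1" "j'-1 < j-1" using that False by auto
      then have "T (i, j'-1) = None" by (rule staircase_beta[OF T Tb])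
      then show ?thesis using False that by (auto simp: glue_def)
    qed
  qed
  have diag: "?G (i, j) \<noteq> None" if "(i, j) \<in> boxes (Suc n)" "i + j = Suc n + 1" for i j
  proof (cases "j = 1")
    case True
    then show ?thesis using c that by (auto simp: glue_def colset_def)
  next
    case False
    then have "(i, j-1) \<in> boxes n" "i + (j-1) = n + 1" using that by (auto simp: boxes_def)
    then have "T (i, j-1) \<noteq> None" by (rule staircase_diag[OF T])
    then show ?thesis using False that by (auto simp: glue_def boxes_def)
  qed
  show ?thesis unfolding staircase_def
  proof (intro CollectI conjI allI impI)
    fix p assume "p \<notin> boxes (Suc n)" then show "?G p = None" by (rule out)
  next
    fix i j i' assume "?G (i,j) = Some Alpha \<and> 1 \<le> i' \<and> i' < i"
    then show "?G (i',j) = None" by (elim conjE) (rule al)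
  next
    fix i j j' assume "?G (i,j) = Some Beta \<and> 1 \<le> j' \<and> j' < j"
    then show "?G (i,j') = None" by (elim conjE) (rule be)
  next
    fix i j assume "(i, j) \<in> boxes (Suc n) \<and> i + j = Suc n + 1"
    then show "?G (i,j) \<noteq> None" by (elim conjE) (rule diag)
  qed
qed

lemma staircaseI:
  assumes "\<And>p. p \<notin> boxes n \<Longrightarrow> T p = None"
    "\<And>i j i'. T (i, j) = Some Alpha \<Longrightarrow> 1 \<le> i' \<Longrightarrow> i' < i \<Longrightarrow> T (i', j) = None"
    "\<And>i j j'. T (i, j) = Some Beta \<Longrightarrow> 1 \<le> j' \<Longrightarrow> j' < j \<Longrightarrow> T (i, j') = None"
    "\<And>i j. (i, j) \<in> boxes n \<Longrightarrow> i + j = n + 1 \<Longrightarrow> T (i, j) \<noteq> None"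
  shows "T \<in> staircase n"
  unfolding staircase_def
proof (intro CollectI conjI allI impI)
  fix p assume "p \<notin> boxes n" then show "T p = None" by (rule assms(1))
next
  fix i j i' assume "T (i,j) = Some Alpha \<and> 1 \<le> i' \<and> i' < i"
  then show "T (i',j) = None" by (elim conjE) (rule assms(2))
next
  fix i j j' assume "T (i,j) = Some Beta \<and> 1 \<le> j' \<and> j' < j"
  then show "T (i,j') = None" by (elim conjE) (rule assms(3))
next
  fix i j assume "(i, j) \<in> boxes n \<and> i + j = n + 1"
  then show "T (i,j) \<noteq> None" by (elim conjE) (rule assms(4))
qed

lemma unglue_in:
  assumes T: "T \<in> staircase (Suc n)"
  shows "unglue T \<in> staircase n"
proof (rule staircaseI)
  fix p assume "p \<notin> boxes n"
  moreover obtain i j where p: "p = (i,j)" by (cases p)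
  ultimately have "j = 0 \<or> (i, Suc j) \<notin> boxes (Suc n)" by (auto simp: boxes_def)
  then show "unglue T p = None" using staircase_out[OF T] p by (auto simp: unglue_def)
next
  fix i j i' assume a: "unglue T (i, j) = Some Alpha" "1 \<le> i'" "i' < i"
  then have "j \<noteq> 0" "T (i, Suc j) = Some Alpha" by (auto simp: unglue_def split: if_splits)
  then show "unglue T (i', j) = None" using staircase_alpha[OF T _ a(2,3)] by (simp add: unglue_def)
next
  fix i j j' assume a: "unglue T (i, j) = Some Beta" "1 \<le> j'" "j' < j"
  then have "j \<noteq> 0" "T (i, Suc j) = Some Beta" by (auto simp: unglue_def split: if_splits)
  moreover have "1 \<le> Suc j'" "Suc j' < Suc j" using a by auto
  ultimately show "unglue T (i, j') = None" using staircase_beta[OF T] a(2) by (simp add: unglue_def)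
next
  fix i j assume a: "(i, j) \<in> boxes n" "i + j = n + 1"
  then have "(i, Suc j) \<in> boxes (Suc n)" "i + Suc j = Suc n + 1" "j \<noteq> 0" by (auto simp: boxes_def)
  then show "unglue T (i, j) \<noteq> None" using staircase_diag[OF T] by (simp add: unglue_def)
qed

lemma col_in:
  assumes T: "T \<in> staircase (Suc n)"
  shows "col T \<in> colset (Suc n) (free n (unglue T))"
  unfolding colset_def
proof (intro CollectI conjI allI impI)
  fix i assume i: "i \<notin> insert (Suc n) (free n (unglue T))"
  show "col T i = None"
  proof (cases "i \<in> {1..n}")
    case True
    then obtain j where "unglue T (i,j) = Some Beta" using i by (auto simp: free_def)
    then have "j \<noteq> 0" "T (i, Suc j) = Some Beta" by (auto simp: unglue_def split: if_splits)
    then have "T (i, 1) = None" using staircase_beta[OF T, of i "Suc j" 1] by simp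
    then show ?thesis by (simp add: col_def)
  next
    case False
    then have "(i, 1) \<notin> boxes (Suc n)" using i by (auto simp: boxes_def)
    then show ?thesis using staircase_out[OF T] by (simp add: col_def)
  qed
next
  have "(Suc n, 1) \<in> boxes (Suc n)" by (simp add: boxes_def)
  then show "col T (Suc n) \<noteq> None" using staircase_diag[OF T] by (simp add: col_def)
next
  fix i i' assume a: "col T i = Some Alpha \<and> i' < i"
  show "col T i' = None"
  proof (cases "i' = 0")
    case True
    have "(i', 1) \<notin> boxes (Suc n)" using True by (simp add: boxes_def)
    then show ?thesis using staircase_out[OF T] by (simp add: col_def)
  next
    case False
    then show ?thesis using a staircase_alpha[OF T, of i 1 i'] by (simp add: col_def)
  qed
qed

lemma staircase_zero: "T \<in> staircase n \<Longrightarrow> T (i, 0) = None"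
  by (rule staircase_out) (auto simp: boxes_def)

lemma glue_unglue: "T \<in> staircase n \<Longrightarrow> glue (col T) (unglue T) = T"
  by (rule ext) (auto simp: glue_def unglue_def col_def staircase_zero)

lemma unglue_glue: "T \<in> staircase n \<Longrightarrow> unglue (glue c T) = T"
  by (rule ext) (auto simp: glue_def unglue_def staircase_zero)

lemma col_glue: "col (glue c T) = c"
  by (rule ext) (simp add: glue_def col_def)

lemma finite_colset: "finite F \<Longrightarrow> finite (colset n F)"
  by (rule finite_subset[OF _ finite_supp_funs[of "insert n F"]]) (auto simp: colset_def)

lemma finite_free: "finite (free n T)"
  by (rule finite_subset[of _ "{1..n}"]) (auto simp: free_def)

lemma sum_decomp:
  "(\<Sum>T\<in>staircase (Suc n). f T) =
   (\<Sum>T'\<in>staircase n. \<Sum>c\<in>colset (Suc n) (free n T'). f (glue c T'))"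
proof -
  have "(\<Sum>T'\<in>staircase n. \<Sum>c\<in>colset (Suc n) (free n T'). f (glue c T')) =
        (\<Sum>(T',c)\<in>Sigma (staircase n) (\<lambda>T'. colset (Suc n) (free n T')). f (glue c T'))"
    by (rule sum.Sigma) (auto simp: finite_staircase finite_colset finite_free)
  also have "\<dots> = (\<Sum>T\<in>staircase (Suc n). f T)"
  proof (rule sum.reindex_bij_witness[where i = "\<lambda>T. (unglue T, col T)" and j = "\<lambda>(T',c). glue c T'"])
    fix T assume "T \<in> staircase (Suc n)"
    then show "(case (unglue T, col T) of (T',c) \<Rightarrow> glue c T') = T"
      "(unglue T, col T) \<in> Sigma (staircase n) (\<lambda>T'. colset (Suc n) (free n T'))"
      by (auto simp: glue_unglue unglue_in col_in)
  next
    fix x assume "x \<in> Sigma (staircase n) (\<lambda>T'. colset (Suc n) (free n T'))"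
    then show "(unglue (case x of (T',c) \<Rightarrow> glue c T'), col (case x of (T',c) \<Rightarrow> glue c T')) = x"
      "(case x of (T',c) \<Rightarrow> glue c T') \<in> staircase (Suc n)"
      by (auto simp: unglue_glue col_glue glue_in)
  qed (auto split: prod.splits)
  finally show ?thesis by simp
qed


definition hh :: "real \<Rightarrow> real \<Rightarrow> real \<Rightarrow> sym option \<Rightarrow> real" where
  "hh a b y v = (case v of None \<Rightarrow> y | Some Alpha \<Rightarrow> a * y | Some Beta \<Rightarrow> b)"

lemma hh_simps[simp]: "hh a b y None = y" "hh a b y (Some Alpha) = a * y" "hh a b y (Some Beta) = b"
  by (simp_all add: hh_def)

definition nocol :: "nat \<Rightarrow> nat set \<Rightarrow> (nat \<Rightarrow> sym option) set" where
  "nocol m F = {c. (\<forall>i. i \<notin> insert m F \<longrightarrow> c i = None) \<and> c m = Some Beta \<and> (\<forall>i\<in>F. c i \<noteq> Some Alpha)}"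

lemma finite_nocol: "finite F \<Longrightarrow> finite (nocol m F)"
  by (rule finite_subset[OF _ finite_supp_funs[of "insert m F"]]) (auto simp: nocol_def)

lemma nocol_empty: "nocol m {} = {(\<lambda>i. None)(m := Some Beta)}"
  by (auto simp: nocol_def)

lemma nocol_insert:
  assumes "x \<notin> F" "x \<noteq> m"
  shows "nocol m (insert x F) = nocol m F \<union> (\<lambda>c. c(x := Some Beta)) ` nocol m F"
proof (intro equalityI subsetI)
  fix c assume c: "c \<in> nocol m (insert x F)"
  show "c \<in> nocol m F \<union> (\<lambda>c. c(x := Some Beta)) ` nocol m F"
  proof (cases "c x")
    case None
    then have "c \<in> nocol m F" using c by (auto simp: nocol_def)
    then show ?thesis by simp
  next
    case (Some s)
    then have s: "s = Beta" using c by (cases s) (auto simp: nocol_def)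
    have "c(x := None) \<in> nocol m F" using c assms by (auto simp: nocol_def)
    moreover have "c = (c(x := None))(x := Some Beta)" using Some s by auto
    ultimately show ?thesis by blast
  qed
next
  fix c assume "c \<in> nocol m F \<union> (\<lambda>c. c(x := Some Beta)) ` nocol m F"
  then show "c \<in> nocol m (insert x F)" using assms by (auto simp: nocol_def split: if_splits)
qed

lemma nocol_x: "c \<in> nocol m F \<Longrightarrow> x \<notin> insert m F \<Longrightarrow> c x = None"
  by (auto simp: nocol_def)

lemma sum_nocol:
  assumes "finite F" "m \<notin> F"
  shows "(\<Sum>c\<in>nocol m F. \<Prod>i\<in>insert m F. hh a b y (c i)) = b * (y + b) ^ card F"
  using assms
proof (induction F rule: finite_induct)
  case empty
  then show ?case by (simp add: nocol_empty)
next
  case (insert x F)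
  have xm: "x \<noteq> m" using insert by auto
  have disj: "nocol m F \<inter> (\<lambda>c. c(x := Some Beta)) ` nocol m F = {}"
    using nocol_x[of _ m F x] insert xm by fastforce
  have inj: "inj_on (\<lambda>c. c(x := Some Beta)) (nocol m F)"
  proof (rule inj_onI)
    fix c d assume "c \<in> nocol m F" "d \<in> nocol m F" "c(x := Some Beta) = d(x := Some Beta)"
    then show "c = d" using nocol_x[of _ m F x] insert xm by (metis fun_upd_triv fun_upd_upd insert_iff)
  qed
  have ins: "insert m (insert x F) = insert x (insert m F)" by auto
  have fin: "finite (insert m F)" using insert by simp
  have xn: "x \<notin> insert m F" using insert xm by simp
  have s1: "(\<Sum>c\<in>nocol m F. \<Prod>i\<in>insert m (insert x F). hh a b y (c i))
      = y * (\<Sum>c\<in>nocol m F. \<Prod>i\<in>insert m F. hh a b y (c i))"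
    unfolding ins sum_distrib_left
    by (rule sum.cong[OF refl]) (simp add: prod.insert[OF fin xn] nocol_x[OF _ xn])
  have s2: "(\<Sum>c\<in>(\<lambda>c. c(x := Some Beta)) ` nocol m F. \<Prod>i\<in>insert m (insert x F). hh a b y (c i))
      = b * (\<Sum>c\<in>nocol m F. \<Prod>i\<in>insert m F. hh a b y (c i))"
    unfolding ins sum_distrib_left sum.reindex[OF inj] o_def
  proof (rule sum.cong[OF refl])
    fix c assume "c \<in> nocol m F"
    have "(\<Prod>i\<in>insert m F. hh a b y ((c(x := Some Beta)) i)) = (\<Prod>i\<in>insert m F. hh a b y (c i))"
      by (rule prod.cong) (use xn in auto)
    then show "(\<Prod>i\<in>insert x (insert m F). hh a b y ((c(x := Some Beta)) i)) = b * (\<Prod>i\<in>insert m F. hh a b y (c i))"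
      by (simp add: prod.insert[OF fin xn])
  qed
  have "(\<Sum>c\<in>nocol m (insert x F). \<Prod>i\<in>insert m (insert x F). hh a b y (c i))
     = (\<Sum>c\<in>nocol m F. \<Prod>i\<in>insert m (insert x F). hh a b y (c i))
      + (\<Sum>c\<in>(\<lambda>c. c(x := Some Beta)) ` nocol m F. \<Prod>i\<in>insert m (insert x F). hh a b y (c i))"
    unfolding nocol_insert[OF insert(2) xm]
    by (rule sum.union_disjoint) (use insert finite_nocol disj in auto)
  also have "\<dots> = (y + b) * (b * (y + b) ^ card F)"
    using s1 s2 insert by (simp add: algebra_simps)
  finally show ?case using insert by simp
qed

lemma colset_empty: "colset m {} = {(\<lambda>i. None)(m := Some Alpha), (\<lambda>i. None)(m := Some Beta)}"
proof (intro equalityI subsetI)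
  fix c assume c: "c \<in> colset m {}"
  then have sup: "\<And>i. i \<noteq> m \<Longrightarrow> c i = None" and cm: "c m \<noteq> None" by (auto simp: colset_def)
  then obtain s where s: "c m = Some s" by auto
  have "c = (\<lambda>i. None)(m := Some s)" using sup s by (auto intro!: ext)
  then show "c \<in> {(\<lambda>i. None)(m := Some Alpha), (\<lambda>i. None)(m := Some Beta)}" by (cases s) auto
qed (auto simp: colset_def)

lemma colset_insert_min:
  assumes m0: "m0 \<notin> F" "m0 < m" "\<forall>a\<in>F. m0 < a"
  shows "colset m (insert m0 F) = colset m F \<union> (\<lambda>c. c(m0 := Some Beta)) ` nocol m F
     \<union> (\<lambda>c. c(m0 := Some Alpha)) ` nocol m F"
proof (intro equalityI subsetI)
  fix c assume c: "c \<in> colset m (insert m0 F)"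
  then have sup: "\<And>i. i \<notin> insert m (insert m0 F) \<Longrightarrow> c i = None" and cm: "c m \<noteq> None"
    and al: "\<And>i i'. c i = Some Alpha \<Longrightarrow> i' < i \<Longrightarrow> c i' = None" by (auto simp: colset_def)
  show "c \<in> colset m F \<union> (\<lambda>c. c(m0 := Some Beta)) ` nocol m F \<union> (\<lambda>c. c(m0 := Some Alpha)) ` nocol m F"
  proof (cases "c m0")
    case None
    then have "c \<in> colset m F" using c by (auto simp: colset_def)
    then show ?thesis by simp
  next
    case (Some s)
    have "c m \<noteq> Some Alpha" using al[of m m0] Some m0 by auto
    then have "c m = Some Beta" using cm by (metis option.exhaust sym.exhaust)
    moreover have "\<forall>i\<in>F. c i \<noteq> Some Alpha" using al Some m0 by force
    ultimately have nc: "c(m0 := None) \<in> nocol m F" using sup m0 by (auto simp: nocol_def)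
    have ceq: "c = (c(m0 := None))(m0 := Some s)" using Some by auto
    show ?thesis
    proof (cases s)
      case Alpha then show ?thesis using nc ceq by blast
    next
      case Beta then show ?thesis using nc ceq by blast
    qed
  qed
next
  fix c assume "c \<in> colset m F \<union> (\<lambda>c. c(m0 := Some Beta)) ` nocol m F \<union> (\<lambda>c. c(m0 := Some Alpha)) ` nocol m F"
  then consider "c \<in> colset m F" | d where "d \<in> nocol m F" "c = d(m0 := Some Beta)"
    | d where "d \<in> nocol m F" "c = d(m0 := Some Alpha)" by blast
  then show "c \<in> colset m (insert m0 F)"
  proof cases
    case 1 then show ?thesis by (auto simp: colset_def)
  next
    case (2 d)
    have noA: "d i \<noteq> Some Alpha" for i
    proof (cases "i \<in> insert m F")
      case False then show ?thesis using 2 by (auto simp: nocol_def)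
    qed (use 2 in \<open>auto simp: nocol_def\<close>)
    then show ?thesis using 2 m0 by (auto simp: colset_def nocol_def split: if_splits)
  next
    case (3 d)
    have "d i' = None" if "i' < m0" for i'
    proof -
      have "i' \<notin> insert m F" using that m0 by auto
      then show ?thesis using 3 by (auto simp: nocol_def)
    qed
    moreover have noA: "d i \<noteq> Some Alpha" for i
    proof (cases "i \<in> insert m F")
      case False then show ?thesis using 3 by (auto simp: nocol_def)
    qed (use 3 in \<open>auto simp: nocol_def\<close>)
    ultimately show ?thesis using 3 m0 by (auto simp: colset_def nocol_def split: if_splits)
  qed
qed

lemma disj_val: "(\<And>c. c\<in>A \<Longrightarrow> c x \<in> VA) \<Longrightarrow> (\<And>c. c \<in> B \<Longrightarrow> c x \<in> VB) \<Longrightarrow> VA \<inter> VB = {} \<Longrightarrow> A \<inter> B = {}"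
  by blast

lemma colset_x: "c \<in> colset m F \<Longrightarrow> x \<notin> insert m F \<Longrightarrow> c x = None"
  by (auto simp: colset_def)

lemma inj_upd: "(\<And>c. c \<in> A \<Longrightarrow> c x = None) \<Longrightarrow> inj_on (\<lambda>c. c(x := v)) A"
  by (rule inj_onI) (metis fun_upd_triv fun_upd_upd)

lemma sum_colset:
  assumes "finite F" "\<forall>i\<in>F. i < m"
  shows "(\<Sum>c\<in>colset m F. \<Prod>i\<in>insert m F. hh a b y (c i)) = (a * y + b) * (y + b) ^ card F"
  using assms
proof (induction F rule: finite_linorder_min_induct)
  case empty
  have "(\<lambda>i. None)(m := Some Alpha) \<noteq> ((\<lambda>i. None)(m := Some Beta) :: nat \<Rightarrow> sym option)"
    by (metis fun_upd_same option.inject sym.distinct(1))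
  then show ?case by (simp add: colset_empty)
next
  case (insert m0 F)
  have m0: "m0 \<notin> F" "m0 < m" "\<forall>a\<in>F. m0 < a" using insert by auto
  have IH: "(\<Sum>c\<in>colset m F. \<Prod>i\<in>insert m F. hh a b y (c i)) = (a * y + b) * (y + b) ^ card F"
    using insert by simp
  have fin: "finite (insert m F)" using insert by simp
  have xn: "m0 \<notin> insert m F" using m0 by simp
  have ins: "insert m (insert m0 F) = insert m0 (insert m F)" by auto
  have mF: "m \<notin> F" using insert by auto
  have NC: "(\<Sum>c\<in>nocol m F. \<Prod>i\<in>insert m F. hh a b y (c i)) = b * (y + b) ^ card F"
    by (rule sum_nocol) (use insert mF in auto)
  have img: "(\<Sum>c\<in>(\<lambda>c. c(m0 := v)) ` nocol m F. \<Prod>i\<in>insert m (insert m0 F). hh a b y (c i))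
      = hh a b y v * (\<Sum>c\<in>nocol m F. \<Prod>i\<in>insert m F. hh a b y (c i))" for v
  proof -
    have inj: "inj_on (\<lambda>c. c(m0 := v)) (nocol m F)" by (rule inj_upd) (rule nocol_x[OF _ xn])
    show ?thesis
    unfolding ins sum.reindex[OF inj] o_def sum_distrib_left
  proof (rule sum.cong[OF refl])
    fix c assume "c \<in> nocol m F"
    have "(\<Prod>i\<in>insert m F. hh a b y ((c(m0 := v)) i)) = (\<Prod>i\<in>insert m F. hh a b y (c i))"
      by (rule prod.cong) (use xn in auto)
    then show "(\<Prod>i\<in>insert m0 (insert m F). hh a b y ((c(m0 := v)) i)) = hh a b y v * (\<Prod>i\<in>insert m F. hh a b y (c i))"
      by (simp add: prod.insert[OF fin xn])
  qed
  qed
  have s1: "(\<Sum>c\<in>colset m F. \<Prod>i\<in>insert m (insert m0 F). hh a b y (c i))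
      = y * (\<Sum>c\<in>colset m F. \<Prod>i\<in>insert m F. hh a b y (c i))"
    unfolding ins sum_distrib_left
    by (rule sum.cong[OF refl]) (simp add: prod.insert[OF fin xn] colset_x[OF _ xn])
  have d1: "colset m F \<inter> (\<lambda>c. c(m0 := Some Beta)) ` nocol m F = {}"
    by (rule disj_val[where x=m0 and VA="{None}" and VB="{Some Beta}"]) (auto simp: colset_x[OF _ xn])
  have d2: "(colset m F \<union> (\<lambda>c. c(m0 := Some Beta)) ` nocol m F) \<inter> (\<lambda>c. c(m0 := Some Alpha)) ` nocol m F = {}"
    by (rule disj_val[where x=m0 and VA="{None, Some Beta}" and VB="{Some Alpha}"]) (auto simp: colset_x[OF _ xn])
  have fins: "finite (colset m F)" "finite (nocol m F)" using insert finite_colset finite_nocol by auto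
  have "(\<Sum>c\<in>colset m (insert m0 F). \<Prod>i\<in>insert m (insert m0 F). hh a b y (c i))
     = (\<Sum>c\<in>colset m F. \<Prod>i\<in>insert m (insert m0 F). hh a b y (c i))
      + (\<Sum>c\<in>(\<lambda>c. c(m0 := Some Beta)) ` nocol m F. \<Prod>i\<in>insert m (insert m0 F). hh a b y (c i))
      + (\<Sum>c\<in>(\<lambda>c. c(m0 := Some Alpha)) ` nocol m F. \<Prod>i\<in>insert m (insert m0 F). hh a b y (c i))"
    unfolding colset_insert_min[OF m0]
    by (subst sum.union_disjoint, use fins d2 in auto, subst sum.union_disjoint, use fins d1 in auto)
  also have "\<dots> = (a * y + b) * (y + b) ^ card (insert m0 F)"
    unfolding s1 img IH NC using insert m0 by (simp add: algebra_simps)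
  finally show ?case .
qed


lemma finite_supp_st: "T \<in> staircase n \<Longrightarrow> finite {p. T p = Some s}"
  by (rule finite_subset[OF _ finite_boxes[of n]]) (auto dest: staircase_out)

lemma finite_supp_col: "c \<in> colset m F \<Longrightarrow> finite F \<Longrightarrow> finite {i. c i = Some s}"
  by (rule finite_subset[of _ "insert m F"]) (auto simp: colset_def)

lemma glue_supp:
  assumes T: "T \<in> staircase n"
  shows "{p. glue c T p = Some s} = (\<lambda>i. (i, 1)) ` {i. c i = Some s} \<union> (\<lambda>(i,j). (i, Suc j)) ` {p. T p = Some s}"
proof (intro equalityI subsetI)
  fix p assume "p \<in> {p. glue c T p = Some s}"
  moreover obtain i j where p: "p = (i,j)" by (cases p)
  ultimately have g: "glue c T (i,j) = Some s" by simp
  show "p \<in> (\<lambda>i. (i, 1)) ` {i. c i = Some s} \<union> (\<lambda>(i,j). (i, Suc j)) ` {p. T p = Some s}"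
  proof (cases "j = 1")
    case True then show ?thesis using g p by (auto simp: glue_def)
  next
    case False
    then have "j \<ge> 2" "T (i, j - 1) = Some s" using g by (auto simp: glue_def split: if_splits)
    then have "(i, j - 1) \<in> {p. T p = Some s}" "p = (\<lambda>(i,j). (i, Suc j)) (i, j - 1)" using p by auto
    then show ?thesis by blast
  qed
next
  fix p assume "p \<in> (\<lambda>i. (i, 1)) ` {i. c i = Some s} \<union> (\<lambda>(i,j). (i, Suc j)) ` {p. T p = Some s}"
  then consider i where "p = (i,1)" "c i = Some s" | i j where "p = (i, Suc j)" "T (i,j) = Some s" by auto
  then show "p \<in> {p. glue c T p = Some s}"
  proof cases
    case 1 then show ?thesis by (simp add: glue_def)
  next
    case (2 i j)
    then have "j \<noteq> 0" using staircase_zero[OF T] by (cases j) auto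
    then show ?thesis using 2 by (simp add: glue_def)
  qed
qed

lemma card_glue:
  assumes T: "T \<in> staircase n" and c: "c \<in> colset m F" and F: "finite F"
  shows "card {p. glue c T p = Some s} = card {i. c i = Some s} + card {p. T p = Some s}"
proof -
  have d: "(\<lambda>i. (i, 1::nat)) ` {i. c i = Some s} \<inter> (\<lambda>(i,j). (i, Suc j)) ` {p. T p = Some s} = {}"
    using staircase_zero[OF T] by auto
  have i1: "inj_on (\<lambda>i. (i, 1::nat)) {i. c i = Some s}" by (rule inj_onI) auto
  have i2: "inj_on (\<lambda>(i,j). (i, Suc j)) {p. T p = Some s}" by (rule inj_onI) auto
  show ?thesis unfolding glue_supp[OF T]
    by (subst card_Un_disjoint) (use d finite_supp_st[OF T] finite_supp_col[OF c F] card_image[OF i1] card_image[OF i2] in auto)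
qed

lemma wt_glue:
  assumes T: "T \<in> staircase n" and c: "c \<in> colset m F" and F: "finite F"
  shows "wt a b (glue c T) = a ^ card {i. c i = Some Alpha} * b ^ card {i. c i = Some Beta} * wt a b T"
  unfolding wt_def N_alpha_def N_beta_def card_glue[OF T c F] by (simp add: power_add)

lemma free_glue:
  assumes T: "T \<in> staircase n"
  shows "free (Suc n) (glue c T) = {i \<in> insert (Suc n) (free n T). c i \<noteq> Some Beta}"
proof (intro equalityI subsetI)
  fix i assume "i \<in> free (Suc n) (glue c T)"
  then have i: "i \<in> {1..Suc n}" and nb: "\<And>j. glue c T (i,j) \<noteq> Some Beta" by (auto simp: free_def)
  have "c i \<noteq> Some Beta" using nb[of 1] by (simp add: glue_def)
  moreover have "i \<in> insert (Suc n) (free n T)"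
  proof (cases "i = Suc n")
    case False
    have "T (i, j) \<noteq> Some Beta" for j
    proof (cases "j = 0")
      case True then show ?thesis using staircase_zero[OF T] by simp
    next
      case False then show ?thesis using nb[of "Suc j"] by (simp add: glue_def)
    qed
    then show ?thesis using i False by (auto simp: free_def)
  qed simp
  ultimately show "i \<in> {i \<in> insert (Suc n) (free n T). c i \<noteq> Some Beta}" by simp
next
  fix i assume a: "i \<in> {i \<in> insert (Suc n) (free n T). c i \<noteq> Some Beta}"
  have "glue c T (i, j) \<noteq> Some Beta" for j
  proof (cases "j \<ge> 2")
    case True
    show ?thesis
    proof (cases "i = Suc n")
      case True
      have "(i, j - 1) \<notin> boxes n" using True \<open>j \<ge> 2\<close> by (auto simp: boxes_def)
      then show ?thesis using staircase_out[OF T] \<open>j \<ge> 2\<close> by (auto simp: glue_def)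
    next
      case False
      then have "i \<in> free n T" using a by auto
      then show ?thesis using \<open>j \<ge> 2\<close> by (auto simp: glue_def free_def)
    qed
  next
    case False
    then show ?thesis using a by (auto simp: glue_def)
  qed
  moreover have "i \<in> {1..Suc n}" using a by (auto simp: free_def)
  ultimately show "i \<in> free (Suc n) (glue c T)" by (auto simp: free_def)
qed

lemma prod_if_pow: "finite G \<Longrightarrow> (\<Prod>i\<in>G. if P i then (x::real) else 1) = x ^ card {i\<in>G. P i}"
  by (simp add: prod.If_cases Int_def conj_commute)

lemma hh_split: "hh a b y v = (if v = Some Alpha then a else 1) * (if v = Some Beta then b else 1) * (if v \<noteq> Some Beta then y else 1)"
  by (cases v rule: option.exhaust) (auto simp: hh_def split: sym.splits)

lemma prod_hh:
  assumes c: "c \<in> colset m F" and F: "finite F"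
  shows "(\<Prod>i\<in>insert m F. hh a b y (c i)) =
     a ^ card {i. c i = Some Alpha} * b ^ card {i. c i = Some Beta} * y ^ card {i\<in>insert m F. c i \<noteq> Some Beta}"
proof -
  have e1: "{i \<in> insert m F. c i = Some s} = {i. c i = Some s}" for s using c by (auto simp: colset_def)
  have fin: "finite (insert m F)" using F by simp
  show ?thesis unfolding hh_split prod.distrib prod_if_pow[OF fin] e1 ..
qed

definition Zy :: "real \<Rightarrow> real \<Rightarrow> nat \<Rightarrow> real \<Rightarrow> real" where
  "Zy a b n y = (\<Sum>T\<in>staircase n. wt a b T * y ^ card (free n T))"

lemma free_sub: "i \<in> free n T \<Longrightarrow> i < Suc n"
  by (auto simp: free_def)

lemma Zy_Suc: "Zy a b (Suc n) y = (a * y + b) * Zy a b n (y + b)"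
proof -
  have "Zy a b (Suc n) y = (\<Sum>T\<in>staircase n. \<Sum>c\<in>colset (Suc n) (free n T).
      wt a b (glue c T) * y ^ card (free (Suc n) (glue c T)))"
    unfolding Zy_def by (rule sum_decomp)
  also have "\<dots> = (\<Sum>T\<in>staircase n. wt a b T * (\<Sum>c\<in>colset (Suc n) (free n T).
      \<Prod>i\<in>insert (Suc n) (free n T). hh a b y (c i)))"
    unfolding sum_distrib_left
    by (intro sum.cong refl) (simp add: wt_glue free_glue prod_hh finite_free)
  also have "\<dots> = (\<Sum>T\<in>staircase n. wt a b T * ((a * y + b) * (y + b) ^ card (free n T)))"
    by (intro sum.cong refl) (simp add: sum_colset finite_free free_sub)
  also have "\<dots> = (a * y + b) * Zy a b n (y + b)"
    unfolding Zy_def sum_distrib_left by (intro sum.cong refl) simp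
  finally show ?thesis .
qed

lemma staircase_0: "staircase 0 = {\<lambda>p. None}"
proof -
  have b: "boxes 0 = {}" by (auto simp: boxes_def)
  have "T \<in> staircase 0 \<Longrightarrow> T = (\<lambda>p. None)" for T using staircase_out[of T 0] b by auto
  moreover have "(\<lambda>p. None) \<in> staircase 0" by (rule staircaseI) (auto simp: b)
  ultimately show ?thesis by blast
qed

lemma Zy_0: "Zy a b 0 y = 1"
  by (simp add: Zy_def staircase_0 wt_def N_alpha_def N_beta_def free_def)

lemma Zy_prod: "Zy a b n y = (\<Prod>k<n. a * (y + real k * b) + b)"
proof (induction n arbitrary: y)
  case 0 then show ?case by (simp add: Zy_0)
next
  case (Suc n)
  show ?case unfolding Zy_Suc Suc prod.lessThan_Suc_shift
    by (simp add: algebra_simps)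
qed

definition Z :: "real \<Rightarrow> real \<Rightarrow> nat \<Rightarrow> real" where
  "Z a b n = (\<Sum>T\<in>staircase n. wt a b T)"

lemma Z_prod: "Z a b n = (\<Prod>k<n. a + b + real k * a * b)"
proof -
  have "Z a b n = Zy a b n 1" by (simp add: Z_def Zy_def)
  then show ?thesis by (simp add: Zy_prod algebra_simps)
qed


definition sh :: "nat \<Rightarrow> nat \<Rightarrow> nat" where "sh t x = (if x \<le> t then x else Suc x)"
definition ush :: "nat \<Rightarrow> nat \<Rightarrow> nat" where "ush t x = (if x \<le> t then x else x - 1)"

definition del :: "nat \<Rightarrow> nat \<Rightarrow> tab \<Rightarrow> tab" where
  "del tr tc T = (\<lambda>(i,k). T (sh tr i, sh tc k))"
definition ins :: "nat \<Rightarrow> nat \<Rightarrow> tab \<Rightarrow> tab" where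
  "ins tr tc U = (\<lambda>(i,k). if i = Suc tr then (if k = tc then Some Beta else None)
     else if k = Suc tc then (if i = tr then Some Alpha else None) else U (ush tr i, ush tc k))"

locale pos =
  fixes n tr tc :: nat
  assumes sum: "tr + tc = Suc n" and tr1: "1 \<le> tr" and tc1: "1 \<le> tc"
begin

lemma F1a:
  assumes T: "T \<in> staircase (Suc n)" and f: "T (tr, tc) \<noteq> None"
  shows "T (Suc tr, tc) = Some Beta \<and> T (tr, Suc tc) = Some Alpha"
proof
  have b1: "(Suc tr, tc) \<in> boxes (Suc n)" "Suc tr + tc = Suc n + 1" using sum tr1 tc1 by (auto simp: boxes_def)
  then obtain s where s: "T (Suc tr, tc) = Some s" using staircase_diag[OF T] by blast
  have "s \<noteq> Alpha" using staircase_alpha[OF T, of "Suc tr" tc tr] s f tr1 by auto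
  then show bt: "T (Suc tr, tc) = Some Beta" using s by (cases s) auto
  have b2: "(tr, Suc tc) \<in> boxes (Suc n)" "tr + Suc tc = Suc n + 1" using sum tr1 tc1 by (auto simp: boxes_def)
  then obtain s' where s': "T (tr, Suc tc) = Some s'" using staircase_diag[OF T] by blast
  have "s' \<noteq> Beta" using staircase_beta[OF T, of tr "Suc tc" tc] s' f tc1 by auto
  then show al: "T (tr, Suc tc) = Some Alpha" using s' by (cases s') auto
qed

lemma F1:
  assumes T: "T \<in> staircase (Suc n)" and f: "T (tr, tc) \<noteq> None"
  shows "T (Suc tr, tc) = Some Beta" "T (tr, Suc tc) = Some Alpha"
    "\<And>k. k \<noteq> tc \<Longrightarrow> T (Suc tr, k) = None" "\<And>i. i \<noteq> tr \<Longrightarrow> T (i, Suc tc) = None"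
proof -
  show bt: "T (Suc tr, tc) = Some Beta" and al: "T (tr, Suc tc) = Some Alpha" using F1a[OF T f] by auto
  fix k assume k: "k \<noteq> tc"
  show "T (Suc tr, k) = None"
  proof (cases "k < tc")
    case True
    show ?thesis
    proof (cases "k = 0")
      case True then show ?thesis using staircase_zero[OF T] by simp
    next
      case False then show ?thesis using staircase_beta[OF T bt, of k] True by simp
    qed
  next
    case False
    then have "(Suc tr, k) \<notin> boxes (Suc n)" using k sum by (auto simp: boxes_def)
    then show ?thesis using staircase_out[OF T] by simp
  qed
next
  fix i assume i: "i \<noteq> tr"
  have al: "T (tr, Suc tc) = Some Alpha" using F1a[OF T f] by auto
  show "T (i, Suc tc) = None"
  proof (cases "i < tr")
    case True
    show ?thesis
    proof (cases "i = 0")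
      case True
      then have "(i, Suc tc) \<notin> boxes (Suc n)" by (auto simp: boxes_def)
      then show ?thesis using staircase_out[OF T] by simp
    next
      case False then show ?thesis using staircase_alpha[OF T al, of i] True by simp
    qed
  next
    case False
    then have "(i, Suc tc) \<notin> boxes (Suc n)" using i sum by (auto simp: boxes_def)
    then show ?thesis using staircase_out[OF T] by simp
  qed
qed

lemma del_in:
  assumes T: "T \<in> staircase (Suc n)" and f: "T (tr, tc) \<noteq> None"
  shows "del tr tc T \<in> staircase n"
proof (rule staircaseI)
  fix p assume p: "p \<notin> boxes n"
  obtain i k where pik: "p = (i,k)" by (cases p)
  have "(sh tr i, sh tc k) \<notin> boxes (Suc n)" using p pik sum by (auto simp: boxes_def sh_def)
  then show "del tr tc T p = None" using staircase_out[OF T] pik by (simp add: del_def)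
next
  fix i k i' assume a: "del tr tc T (i, k) = Some Alpha" "1 \<le> i'" "i' < i"
  have "1 \<le> sh tr i'" "sh tr i' < sh tr i" using a(2,3) by (auto simp: sh_def)
  then show "del tr tc T (i', k) = None" using staircase_alpha[OF T, of "sh tr i" "sh tc k" "sh tr i'"] a(1)
    by (simp add: del_def)
next
  fix i k k' assume a: "del tr tc T (i, k) = Some Beta" "1 \<le> k'" "k' < k"
  have "1 \<le> sh tc k'" "sh tc k' < sh tc k" using a(2,3) by (auto simp: sh_def)
  then show "del tr tc T (i, k') = None" using staircase_beta[OF T, of "sh tr i" "sh tc k" "sh tc k'"] a(1)
    by (simp add: del_def)
next
  fix i k assume a: "(i, k) \<in> boxes n" "i + k = n + 1"
  show "del tr tc T (i, k) \<noteq> None"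
  proof (cases "i \<le> tr \<and> k \<le> tc")
    case True
    then have "i = tr" "k = tc" using a sum by auto
    then show ?thesis using f by (simp add: del_def sh_def)
  next
    case False
    then have "(sh tr i, sh tc k) \<in> boxes (Suc n)" "sh tr i + sh tc k = Suc n + 1"
      using a sum by (auto simp: boxes_def sh_def)
    then show ?thesis using staircase_diag[OF T] by (simp add: del_def)
  qed
qed

lemma ins_del:
  assumes T: "T \<in> staircase (Suc n)" and f: "T (tr, tc) \<noteq> None"
  shows "ins tr tc (del tr tc T) = T"
proof (rule ext)
  fix p :: "nat \<times> nat" obtain i k where pik: "p = (i,k)" by (cases p)
  show "ins tr tc (del tr tc T) p = T p"
  proof (cases "i = Suc tr")
    case True then show ?thesis using F1[OF T f] pik by (auto simp: ins_def)
  next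
    case False
    show ?thesis
    proof (cases "k = Suc tc")
      case True then show ?thesis using F1[OF T f] pik False by (auto simp: ins_def)
    next
      case False2: False
      have "sh tr (ush tr i) = i" "sh tc (ush tc k) = k" using False False2 by (auto simp: sh_def ush_def)
      then show ?thesis using pik False False2 by (simp add: ins_def del_def)
    qed
  qed
qed

lemma del_ins: "del tr tc (ins tr tc U) = U"
proof (rule ext)
  fix p :: "nat \<times> nat" obtain i k where pik: "p = (i,k)" by (cases p)
  have "sh tr i \<noteq> Suc tr" "sh tc k \<noteq> Suc tc" "ush tr (sh tr i) = i" "ush tc (sh tc k) = k"
    by (auto simp: sh_def ush_def)
  then show "del tr tc (ins tr tc U) p = U p" using pik by (simp add: ins_def del_def)
qed

lemma ins_in:
  assumes U: "U \<in> staircase n"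
  shows "ins tr tc U \<in> staircase (Suc n)"
proof (rule staircaseI)
  fix p assume p: "p \<notin> boxes (Suc n)"
  obtain i k where pik: "p = (i,k)" by (cases p)
  show "ins tr tc U p = None"
  proof (cases "i = Suc tr \<or> k = Suc tc")
    case True then show ?thesis using p pik sum tr1 tc1 by (auto simp: ins_def boxes_def)
  next
    case False
    then have "(ush tr i, ush tc k) \<notin> boxes n" using p pik sum tr1 tc1 by (auto simp: boxes_def ush_def)
    then show ?thesis using staircase_out[OF U] pik False by (auto simp: ins_def)
  qed
next
  fix i k i' assume a: "ins tr tc U (i, k) = Some Alpha" "1 \<le> i'" "i' < i"
  show "ins tr tc U (i', k) = None"
  proof (cases "k = Suc tc")
    case True
    then have "i = tr" using a by (auto simp: ins_def split: if_splits)
    then show ?thesis using True a by (auto simp: ins_def)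
  next
    case False
    have ir: "i \<noteq> Suc tr" using a False by (auto simp: ins_def split: if_splits)
    have Ua: "U (ush tr i, ush tc k) = Some Alpha" using a ir False by (simp add: ins_def)
    show ?thesis
    proof (cases "i' = Suc tr")
      case True
      then have "k \<noteq> tc" 
      proof (intro notI)
        assume "k = tc"
        then have "(ush tr i, ush tc k) \<notin> boxes n" using True a(3) sum ir by (auto simp: boxes_def ush_def)
        then show False using staircase_out[OF U] Ua by simp
      qed
      then show ?thesis using True by (simp add: ins_def)
    next
      case False2: False
      have "1 \<le> ush tr i'" "ush tr i' < ush tr i" using a(2,3) ir False2 tr1 by (auto simp: ush_def)
      then have "U (ush tr i', ush tc k) = None" using staircase_alpha[OF U Ua] by simp
      then show ?thesis using False False2 by (simp add: ins_def)
    qed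
  qed
next
  fix i k k' assume a: "ins tr tc U (i, k) = Some Beta" "1 \<le> k'" "k' < k"
  show "ins tr tc U (i, k') = None"
  proof (cases "i = Suc tr")
    case True
    then have "k = tc" using a by (auto simp: ins_def split: if_splits)
    then show ?thesis using True a by (auto simp: ins_def)
  next
    case False
    have kc: "k \<noteq> Suc tc" using a False by (auto simp: ins_def split: if_splits)
    have Ub: "U (ush tr i, ush tc k) = Some Beta" using a kc False by (simp add: ins_def)
    show ?thesis
    proof (cases "k' = Suc tc")
      case True
      then have "i \<noteq> tr"
      proof (intro notI)
        assume "i = tr"
        then have "(ush tr i, ush tc k) \<notin> boxes n" using True a(3) sum kc by (auto simp: boxes_def ush_def)
        then show False using staircase_out[OF U] Ub by simp
      qed
      then show ?thesis using True False by (simp add: ins_def)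
    next
      case False2: False
      have "1 \<le> ush tc k'" "ush tc k' < ush tc k" using a(2,3) kc False2 tc1 by (auto simp: ush_def)
      then have "U (ush tr i, ush tc k') = None" using staircase_beta[OF U Ub] by simp
      then show ?thesis using False False2 by (simp add: ins_def)
    qed
  qed
next
  fix i k assume a: "(i, k) \<in> boxes (Suc n)" "i + k = Suc n + 1"
  show "ins tr tc U (i, k) \<noteq> None"
  proof (cases "i = Suc tr \<or> k = Suc tc")
    case True then show ?thesis using a sum by (auto simp: ins_def)
  next
    case False
    then have "(ush tr i, ush tc k) \<in> boxes n" "ush tr i + ush tc k = n + 1"
      using a sum tr1 tc1 by (auto simp: boxes_def ush_def)
    then show ?thesis using staircase_diag[OF U] False by (simp add: ins_def)
  qed
qed

lemma ins_tr_tc: "ins tr tc U (tr, tc) = U (tr, tc)"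
  by (simp add: ins_def ush_def)

lemma ins_supp:
  assumes U: "U \<in> staircase n"
  shows "{p. ins tr tc U p = Some s} =
    (if s = Alpha then {(tr, Suc tc)} else {(Suc tr, tc)}) \<union> (\<lambda>(i,k). (sh tr i, sh tc k)) ` {p. U p = Some s}"
proof (intro equalityI subsetI)
  fix p assume "p \<in> {p. ins tr tc U p = Some s}"
  then have p: "ins tr tc U p = Some s" by simp
  obtain i k where pik: "p = (i,k)" by (cases p)
  show "p \<in> (if s = Alpha then {(tr, Suc tc)} else {(Suc tr, tc)}) \<union> (\<lambda>(i,k). (sh tr i, sh tc k)) ` {p. U p = Some s}"
  proof (cases "i = Suc tr \<or> k = Suc tc")
    case True then show ?thesis using p pik by (cases s) (auto simp: ins_def split: if_splits)
  next
    case False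
    then have "U (ush tr i, ush tc k) = Some s" "p = (\<lambda>(i,k). (sh tr i, sh tc k)) (ush tr i, ush tc k)"
      using p pik by (auto simp: ins_def sh_def ush_def)
    then show ?thesis by blast
  qed
next
  fix p assume p: "p \<in> (if s = Alpha then {(tr, Suc tc)} else {(Suc tr, tc)}) \<union> (\<lambda>(i,k). (sh tr i, sh tc k)) ` {p. U p = Some s}"
  show "p \<in> {p. ins tr tc U p = Some s}"
  proof (cases "p \<in> (\<lambda>(i,k). (sh tr i, sh tc k)) ` {p. U p = Some s}")
    case True
    then obtain i k where "p = (sh tr i, sh tc k)" "U (i,k) = Some s" by auto
    moreover have "ins tr tc U (sh tr i, sh tc k) = U (i,k)" using del_ins[of U] 
      by (metis case_prod_conv del_def)
    ultimately show ?thesis by simp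
  next
    case False
    then show ?thesis using p by (cases s) (auto simp: ins_def)
  qed
qed

lemma card_ins:
  assumes U: "U \<in> staircase n"
  shows "card {p. ins tr tc U p = Some s} = Suc (card {p. U p = Some s})"
proof -
  have inj: "inj_on (\<lambda>(i,k). (sh tr i, sh tc k)) {p. U p = Some s}"
    by (rule inj_onI) (auto simp: sh_def split: if_splits)
  have nin: "(if s = Alpha then (tr, Suc tc) else (Suc tr, tc)) \<notin> (\<lambda>(i,k). (sh tr i, sh tc k)) ` {p. U p = Some s}"
    by (auto simp: sh_def split: if_splits)
  have e: "(if s = Alpha then {(tr, Suc tc)} else {(Suc tr, tc)}) = {if s = Alpha then (tr, Suc tc) else (Suc tr, tc)}"
    by simp
  show ?thesis unfolding ins_supp[OF U] e
    using nin card_image[OF inj] finite_supp_st[OF U] by simp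
qed

lemma wt_ins: "U \<in> staircase n \<Longrightarrow> wt a b (ins tr tc U) = a * b * wt a b U"
  unfolding wt_def N_alpha_def N_beta_def card_ins by simp

end


definition W :: "real \<Rightarrow> real \<Rightarrow> nat \<Rightarrow> nat set \<Rightarrow> real" where
  "W a b n J = (\<Sum>T\<in>{T \<in> staircase n. \<forall>j\<in>J. T (n - j, j) \<noteq> None}. wt a b T)"

context pos begin

lemma ins_pos:
  assumes "1 \<le> j'" "j' + 2 \<le> tc"
  shows "ins tr tc U (Suc n - j', j') = U (n - j', j')"
proof -
  have "Suc n - j' \<noteq> Suc tr" "\<not> Suc n - j' \<le> tr" "j' \<noteq> Suc tc" "j' \<le> tc" "Suc n - j' - 1 = n - j'"
    using assms sum by arith+
  then show ?thesis by (simp add: ins_def ush_def)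
qed

lemma W_step:
  assumes J: "\<forall>j'\<in>J. 1 \<le> j' \<and> j' + 2 \<le> tc"
  shows "W a b (Suc n) (insert tc J) = a * b * W a b n J"
proof -
  let ?S1 = "{T \<in> staircase (Suc n). \<forall>j\<in>insert tc J. T (Suc n - j, j) \<noteq> None}"
  let ?S2 = "{U \<in> staircase n. \<forall>j\<in>J. U (n - j, j) \<noteq> None}"
  have trc: "Suc n - tc = tr" using sum by simp
  have "(\<Sum>U\<in>?S2. wt a b (ins tr tc U)) = (\<Sum>T\<in>?S1. wt a b T)"
  proof (rule sum.reindex_bij_witness[where i = "del tr tc" and j = "ins tr tc"])
    fix U assume U: "U \<in> ?S2"
    then show "del tr tc (ins tr tc U) = U" by (simp add: del_ins)
    show "ins tr tc U \<in> ?S1"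
    proof -
      have "ins tr tc U \<in> staircase (Suc n)" using U ins_in by simp
      moreover have "ins tr tc U (tr, tc) \<noteq> None"
      proof -
        have "(tr, tc) \<in> boxes n" "tr + tc = n + 1" using sum tr1 tc1 by (auto simp: boxes_def)
        then show ?thesis using staircase_diag[of U n] U ins_tr_tc by simp
      qed
      moreover have "ins tr tc U (Suc n - j, j) \<noteq> None" if "j \<in> J" for j
        using that U J ins_pos by simp
      ultimately show ?thesis using trc by auto
    qed
    show "wt a b (ins tr tc U) = wt a b (ins tr tc U)" ..
  next
    fix T assume T: "T \<in> ?S1"
    then have Ts: "T \<in> staircase (Suc n)" and f: "T (tr, tc) \<noteq> None" using trc by auto
    show "ins tr tc (del tr tc T) = T" by (rule ins_del[OF Ts f])
    have "del tr tc T (n - j, j) \<noteq> None" if "j \<in> J" for j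
    proof -
      have "ins tr tc (del tr tc T) (Suc n - j, j) \<noteq> None" using ins_del[OF Ts f] T that by simp
      then show ?thesis using ins_pos that J by simp
    qed
    then show "del tr tc T \<in> ?S2" using del_in[OF Ts f] by simp
  qed
  moreover have "(\<Sum>U\<in>?S2. wt a b (ins tr tc U)) = a * b * W a b n J"
    unfolding W_def sum_distrib_left by (rule sum.cong) (auto simp: wt_ins)
  ultimately show ?thesis unfolding W_def by simp
qed

end

definition noncons :: "nat set \<Rightarrow> bool" where
  "noncons J = (\<forall>x\<in>J. \<forall>y\<in>J. x < y \<longrightarrow> Suc x < y)"

lemma W_empty: "W a b n {} = Z a b n"
  by (simp add: W_def Z_def)

lemma W_formula:
  "J \<subseteq> {1..n-1} \<Longrightarrow> noncons J \<Longrightarrow> W a b n J = (a * b) ^ card J * Z a b (n - card J)"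
proof (induction "card J" arbitrary: J n)
  case 0
  then have "J = {}" using finite_subset[OF 0(2)] by auto
  then show ?case by (simp add: W_empty)
next
  case (Suc m)
  have fin: "finite J" using finite_subset[OF Suc(3)] by simp
  then have ne: "J \<noteq> {}" using Suc(2) by auto
  define tc where "tc = Max J"
  have tcJ: "tc \<in> J" using fin ne by (simp add: tc_def)
  have tcmax: "\<forall>j\<in>J. j \<le> tc" using fin by (simp add: tc_def)
  obtain n' where n': "n = Suc n'" using tcJ Suc(3) by (cases n) auto
  define tr where "tr = Suc n' - tc"
  have tc1: "1 \<le> tc" "tc \<le> n'" using tcJ Suc(3) n' by auto
  interpret p: pos n' tr tc using tc1 by unfold_locales (auto simp: tr_def)
  define J' where "J' = J - {tc}"
  have JJ: "J = insert tc J'" using tcJ by (auto simp: J'_def)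
  have cJ': "card J' = m" using Suc(2) fin tcJ by (simp add: J'_def)
  have J'b: "\<forall>j'\<in>J'. 1 \<le> j' \<and> j' + 2 \<le> tc"
  proof
    fix j' assume j': "j' \<in> J'"
    then have "j' < tc" "1 \<le> j'" using tcmax Suc(3) by (auto simp: J'_def)
    then have "Suc j' < tc" using Suc(4) j' tcJ unfolding noncons_def J'_def by blast
    then show "1 \<le> j' \<and> j' + 2 \<le> tc" using \<open>1 \<le> j'\<close> by simp
  qed
  have J'sub: "J' \<subseteq> {1..n'-1}" using J'b tc1 by auto
  have J'nc: "noncons J'" using Suc(4) by (auto simp: noncons_def J'_def)
  have "W a b n J = a * b * W a b n' J'" unfolding n' JJ by (rule p.W_step[OF J'b])
  also have "\<dots> = a * b * ((a * b) ^ m * Z a b (n' - m))"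
    using Suc(1)[OF cJ'[symmetric] J'sub J'nc] cJ' by simp
  also have "\<dots> = (a * b) ^ card J * Z a b (n - card J)"
    using Suc(2)[symmetric] n' by simp
  finally show ?case .
qed

lemma W_cons:
  assumes "x \<in> J" "Suc x \<in> J" "J \<subseteq> {1..n-1}"
  shows "W a b n J = 0"
proof -
  have e: "{T \<in> staircase n. \<forall>j\<in>J. T (n - j, j) \<noteq> None} = {}"
  proof (rule ccontr)
    assume "{T \<in> staircase n. \<forall>j\<in>J. T (n - j, j) \<noteq> None} \<noteq> {}"
    then obtain T where T: "T \<in> staircase n" "\<forall>j\<in>J. T (n - j, j) \<noteq> None" by auto
    have x: "1 \<le> x" "Suc x \<le> n - 1" using assms by auto
    obtain n' where n': "n = Suc n'" using x by (cases n) auto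
    interpret p: pos n' "n - x" x using x n' by unfold_locales auto
    have "T (n - x, x) \<noteq> None" using T assms by auto
    then have al: "T (n - x, Suc x) = Some Alpha" using p.F1a[of T] T n' by auto
    have "T (n - Suc x, Suc x) = None" using staircase_alpha[OF T(1) al] x by simp
    then show False using T assms by auto
  qed
  show ?thesis by (simp only: W_def e sum.empty)
qed


lemma ie_aux:
  "finite A \<Longrightarrow> (\<Sum>J\<in>Pow A. (-1::real) ^ (card J + k) * real (card J choose k)) = (if card A = k then 1 else 0)"
proof (induction A arbitrary: k rule: finite_induct)
  case empty
  then show ?case by (cases k) auto
next
  case (insert x A)
  have inj: "inj_on (insert x) (Pow A)"
  proof (rule inj_onI)
    fix B C assume "B \<in> Pow A" "C \<in> Pow A" "insert x B = insert x C"
    then show "B = C" using insert(2) by (metis PowD insert_ident subsetD)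
  qed
  have d: "Pow A \<inter> insert x ` Pow A = {}" using insert(2) by auto
  have cardins: "J \<in> Pow A \<Longrightarrow> card (insert x J) = Suc (card J)" for J
    using insert finite_subset by (metis PowD card_insert_disjoint subsetD)
  have "(\<Sum>J\<in>Pow (insert x A). (-1::real) ^ (card J + k) * real (card J choose k))
      = (\<Sum>J\<in>Pow A. (-1::real) ^ (card J + k) * real (card J choose k))
      + (\<Sum>J\<in>Pow A. (-1::real) ^ (Suc (card J) + k) * real (Suc (card J) choose k))"
    unfolding Pow_insert using insert(1) d
    by (subst sum.union_disjoint) (auto simp: sum.reindex[OF inj] cardins)
  also have "\<dots> = (if card (insert x A) = k then 1 else 0)"
  proof (cases k)
    case 0
    then show ?thesis using insert by (simp add: sum_negf)
  next
    case (Suc k')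
    have "(\<Sum>J\<in>Pow A. (-1::real) ^ (Suc (card J) + k) * real (Suc (card J) choose k))
       = - (\<Sum>J\<in>Pow A. (-1::real) ^ (card J + k) * real (card J choose k))
         + (\<Sum>J\<in>Pow A. (-1::real) ^ (card J + k') * real (card J choose k'))"
      unfolding Suc by (simp add: sum.distrib sum_negf algebra_simps)
    then show ?thesis using insert Suc by simp
  qed
  finally show ?case .
qed

definition Aset :: "nat \<Rightarrow> tab \<Rightarrow> nat set" where
  "Aset n T = {j \<in> {1..n-1}. T (n - j, j) \<noteq> None}"

lemma X_Aset: "X n T = card (Aset n T)" by (simp add: X_def Aset_def)

lemma sum_Xk:
  "(\<Sum>T\<in>{T \<in> staircase n. X n T = k}. wt a b T) =
   (\<Sum>J\<in>Pow {1..n-1}. (-1::real) ^ (card J + k) * real (card J choose k) * W a b n J)"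
proof -
  have finA: "finite (Aset n T)" for T by (rule finite_subset[of _ "{1..n-1}"]) (auto simp: Aset_def)
  have "(\<Sum>T\<in>{T \<in> staircase n. X n T = k}. wt a b T) =
        (\<Sum>T\<in>staircase n. wt a b T * (if card (Aset n T) = k then 1 else 0))"
    by (simp add: sum.inter_filter[symmetric] finite_staircase X_Aset if_distrib cong: if_cong)
  also have "\<dots> = (\<Sum>T\<in>staircase n. \<Sum>J\<in>{J \<in> Pow {1..n-1}. J \<subseteq> Aset n T}.
        wt a b T * ((-1::real) ^ (card J + k) * real (card J choose k)))"
  proof (rule sum.cong[OF refl])
    fix T
    have e: "{J \<in> Pow {1..n-1}. J \<subseteq> Aset n T} = Pow (Aset n T)" by (auto simp: Aset_def)
    show "wt a b T * (if card (Aset n T) = k then 1 else 0) = (\<Sum>J\<in>{J \<in> Pow {1..n-1}. J \<subseteq> Aset n T}.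
        wt a b T * ((-1::real) ^ (card J + k) * real (card J choose k)))"
      unfolding e sum_distrib_left[symmetric] ie_aux[OF finA] ..
  qed
  also have "\<dots> = (\<Sum>J\<in>Pow {1..n-1}. \<Sum>T\<in>{T \<in> staircase n. J \<subseteq> Aset n T}.
        wt a b T * ((-1::real) ^ (card J + k) * real (card J choose k)))"
    by (rule sum.swap_restrict) (auto simp: finite_staircase)
  also have "\<dots> = (\<Sum>J\<in>Pow {1..n-1}. (-1::real) ^ (card J + k) * real (card J choose k) * W a b n J)"
  proof (rule sum.cong[OF refl])
    fix J assume J: "J \<in> Pow {1..n-1}"
    have e: "{T \<in> staircase n. J \<subseteq> Aset n T} = {T \<in> staircase n. \<forall>j\<in>J. T (n - j, j) \<noteq> None}"
      using J by (auto simp: Aset_def)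
    show "(\<Sum>T\<in>{T \<in> staircase n. J \<subseteq> Aset n T}. wt a b T * ((-1::real) ^ (card J + k) * real (card J choose k)))
       = (-1::real) ^ (card J + k) * real (card J choose k) * W a b n J"
      unfolding e W_def sum_distrib_right[symmetric] by (simp add: mult.commute)
  qed
  finally show ?thesis .
qed

definition ncnt :: "nat \<Rightarrow> nat \<Rightarrow> nat" where
  "ncnt N m = card {J. J \<subseteq> {1..N} \<and> noncons J \<and> card J = m}"

lemma sum_Xk2:
  "(\<Sum>T\<in>{T \<in> staircase n. X n T = k}. wt a b T) =
   (\<Sum>m\<le>n. (-1::real) ^ (m + k) * real (m choose k) * real (ncnt (n-1) m) * (a * b) ^ m * Z a b (n - m))"
proof -
  let ?S = "{J \<in> Pow {1..n-1}. noncons J}"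
  have "(\<Sum>J\<in>Pow {1..n-1}. (-1::real) ^ (card J + k) * real (card J choose k) * W a b n J)
     = (\<Sum>J\<in>?S. (-1::real) ^ (card J + k) * real (card J choose k) * ((a * b) ^ card J * Z a b (n - card J)))"
  proof -
    have "(\<Sum>J\<in>Pow {1..n-1}. (-1::real) ^ (card J + k) * real (card J choose k) * W a b n J)
       = (\<Sum>J\<in>?S. (-1::real) ^ (card J + k) * real (card J choose k) * W a b n J)"
    proof (rule sum.mono_neutral_right)
      show "\<forall>J\<in>Pow {1..n-1} - ?S. (-1::real) ^ (card J + k) * real (card J choose k) * W a b n J = 0"
      proof
        fix J assume "J \<in> Pow {1..n-1} - ?S"
        then obtain x y where xy: "x \<in> J" "y \<in> J" "x < y" "\<not> Suc x < y" "J \<subseteq> {1..n-1}"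
          by (auto simp: noncons_def)
        then have "y = Suc x" by simp
        then show "(-1::real) ^ (card J + k) * real (card J choose k) * W a b n J = 0"
          using W_cons[of x J n a b] xy \<open>y = Suc x\<close> by simp
      qed
    qed auto
    also have "\<dots> = (\<Sum>J\<in>?S. (-1::real) ^ (card J + k) * real (card J choose k) * ((a * b) ^ card J * Z a b (n - card J)))"
      by (rule sum.cong) (auto simp: W_formula)
    finally show ?thesis .
  qed
  also have "\<dots> = (\<Sum>m\<le>n. \<Sum>J\<in>{J. J \<in> ?S \<and> card J = m}.
        (-1::real) ^ (card J + k) * real (card J choose k) * ((a * b) ^ card J * Z a b (n - card J)))"
  proof (rule sum.group[symmetric])
    show "card ` ?S \<subseteq> {..n}"
    proof
      fix m assume "m \<in> card ` ?S"
      then obtain J where "J \<subseteq> {1..n-1}" "m = card J" by auto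
      then have "m \<le> card {1..n-1}" using card_mono[of "{1..n-1}" J] by simp
      then show "m \<in> {..n}" by simp
    qed
  qed auto
  also have "\<dots> = (\<Sum>m\<le>n. (-1::real) ^ (m + k) * real (m choose k) * real (ncnt (n-1) m) * (a * b) ^ m * Z a b (n - m))"
  proof (rule sum.cong[OF refl])
    fix m
    have e: "{J. J \<in> ?S \<and> card J = m} = {J. J \<subseteq> {1..n-1} \<and> noncons J \<and> card J = m}" by auto
    show "(\<Sum>J\<in>{J. J \<in> ?S \<and> card J = m}.
        (-1::real) ^ (card J + k) * real (card J choose k) * ((a * b) ^ card J * Z a b (n - card J)))
      = (-1::real) ^ (m + k) * real (m choose k) * real (ncnt (n-1) m) * (a * b) ^ m * Z a b (n - m)"
      by (subst sum.cong[OF refl, where h = "\<lambda>J. (-1::real) ^ (m + k) * real (m choose k) * ((a * b) ^ m * Z a b (n - m))"])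
         (auto simp: e ncnt_def)
  qed
  finally show ?thesis using sum_Xk by simp
qed


definition NS :: "nat \<Rightarrow> nat \<Rightarrow> nat set set" where
  "NS N m = {J. J \<subseteq> {1..N} \<and> noncons J \<and> card J = m}"

lemma ncnt_NS: "ncnt N m = card (NS N m)" by (simp add: ncnt_def NS_def)

lemma finite_NS: "finite (NS N m)"
  by (rule finite_subset[of _ "Pow {1..N}"]) (auto simp: NS_def)

lemma NS_0: "NS N 0 = {{}}"
proof -
  have "J \<subseteq> {1..N} \<Longrightarrow> card J = 0 \<Longrightarrow> J = {}" for J using finite_subset[of J "{1..N}"] by auto
  then show ?thesis by (auto simp: NS_def noncons_def)
qed

lemma NS_0_Suc: "NS 0 (Suc m) = {}"
  by (auto simp: NS_def)

lemma NS_1_Suc: "NS (Suc 0) (Suc m) = (if m = 0 then {{1}} else {})"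
proof -
  have a: "J \<subseteq> {1} \<Longrightarrow> J = {} \<or> J = {1}" for J :: "nat set" by auto
  have "J \<subseteq> {1} \<Longrightarrow> card J = Suc m \<Longrightarrow> J = {1} \<and> m = 0" for J :: "nat set"
    using a[of J] by auto
  then show ?thesis by (auto simp: NS_def noncons_def)
qed

lemma NS_SS:
  "NS (Suc (Suc N)) (Suc m) = NS (Suc N) (Suc m) \<union> insert (Suc (Suc N)) ` NS N m"
proof (intro equalityI subsetI)
  fix J assume J: "J \<in> NS (Suc (Suc N)) (Suc m)"
  then have Js: "J \<subseteq> {1..Suc (Suc N)}" and nc: "noncons J" and cJ: "card J = Suc m" by (auto simp: NS_def)
  have fin: "finite J" using finite_subset[OF Js] by simp
  show "J \<in> NS (Suc N) (Suc m) \<union> insert (Suc (Suc N)) ` NS N m"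
  proof (cases "Suc (Suc N) \<in> J")
    case False
    then have "J \<subseteq> {1..Suc N}" using Js by (auto simp: le_Suc_eq)
    then show ?thesis using nc cJ by (simp add: NS_def)
  next
    case True
    have "Suc N \<notin> J" using nc True unfolding noncons_def by force
    then have "J - {Suc (Suc N)} \<subseteq> {1..N}" using Js by (auto simp: le_Suc_eq)
    moreover have "noncons (J - {Suc (Suc N)})" using nc by (auto simp: noncons_def)
    moreover have "card (J - {Suc (Suc N)}) = m" using cJ True fin by simp
    ultimately have "J - {Suc (Suc N)} \<in> NS N m" by (simp add: NS_def)
    moreover have "J = insert (Suc (Suc N)) (J - {Suc (Suc N)})" using True by auto
    ultimately show ?thesis by blast
  qed
next
  fix J assume "J \<in> NS (Suc N) (Suc m) \<union> insert (Suc (Suc N)) ` NS N m"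
  then consider "J \<in> NS (Suc N) (Suc m)" | J' where "J' \<in> NS N m" "J = insert (Suc (Suc N)) J'" by blast
  then show "J \<in> NS (Suc (Suc N)) (Suc m)"
  proof cases
    case 1 then show ?thesis by (auto simp: NS_def)
  next
    case (2 J')
    then have J's: "J' \<subseteq> {1..N}" and nc: "noncons J'" and cJ: "card J' = m" by (auto simp: NS_def)
    have fin: "finite J'" using finite_subset[OF J's] by simp
    have nin: "Suc (Suc N) \<notin> J'" using J's by auto
    have "noncons J" unfolding 2(2) noncons_def using nc J's
      by (auto simp: noncons_def)
    moreover have "card J = Suc m" using 2 fin nin cJ by simp
    moreover have "J \<subseteq> {1..Suc (Suc N)}" using 2 J's by auto
    ultimately show ?thesis by (simp add: NS_def)
  qed
qed

lemma ncnt_SS: "ncnt (Suc (Suc N)) (Suc m) = ncnt (Suc N) (Suc m) + ncnt N m"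
proof -
  have d: "NS (Suc N) (Suc m) \<inter> insert (Suc (Suc N)) ` NS N m = {}" by (auto simp: NS_def)
  have inj: "inj_on (insert (Suc (Suc N))) (NS N m)"
  proof (rule inj_onI)
    fix B C assume "B \<in> NS N m" "C \<in> NS N m" "insert (Suc (Suc N)) B = insert (Suc (Suc N)) C"
    moreover then have "Suc (Suc N) \<notin> B" "Suc (Suc N) \<notin> C" by (auto simp: NS_def)
    ultimately show "B = C" by (metis insert_ident)
  qed
  show ?thesis unfolding ncnt_NS NS_SS
    by (subst card_Un_disjoint) (auto simp: finite_NS d card_image[OF inj])
qed

lemma ncnt_formula: "ncnt N m = (N + 1 - m) choose m"
proof (induction N arbitrary: m rule: less_induct)
  case (less N)
  show ?case
  proof (cases m)
    case 0 then show ?thesis by (simp add: ncnt_NS NS_0)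
  next
    case (Suc m')
    show ?thesis
    proof (cases N)
      case 0 then show ?thesis using Suc by (simp add: ncnt_NS NS_0_Suc)
    next
      case (Suc N1)
      show ?thesis
      proof (cases N1)
        case 0 then show ?thesis using Suc \<open>m = Suc m'\<close> by (cases m') (auto simp: ncnt_NS NS_1_Suc)
      next
        case (Suc N2)
        have N: "N = Suc (Suc N2)" using \<open>N = Suc N1\<close> Suc by simp
        have "ncnt N m = ncnt (Suc N2) (Suc m') + ncnt N2 m'" using N \<open>m = Suc m'\<close> ncnt_SS by simp
        also have "\<dots> = ((N2 + 2 - Suc m') choose (Suc m')) + ((N2 + 1 - m') choose m')"
          using less N by simp
        also have "\<dots> = (N + 1 - m) choose m"
        proof (cases "m' \<le> N2 + 1")
          case True
          then have "N + 1 - m = Suc (N2 + 1 - m')" "N2 + 2 - Suc m' = N2 + 1 - m'" using N \<open>m = Suc m'\<close> by auto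
          then show ?thesis using \<open>m = Suc m'\<close> by simp
        next
          case False
          then show ?thesis using N \<open>m = Suc m'\<close> by auto
        qed
        finally show ?thesis .
      qed
    qed
  qed
qed


lemma phi_lim0:
  fixes K :: real and c d :: nat
  shows "(\<lambda>n. (real n - real c) / (K + real n + real d)) \<longlonglongrightarrow> 1"
  by real_asymp

lemma phi_lim:
  fixes a b :: real and c d :: nat
  assumes "a > 0" "b > 0"
  shows "(\<lambda>n. (real n - real c) * (a * b) / (a + b + (real n + real d) * a * b)) \<longlonglongrightarrow> 1"
proof -
  have "(real n - real c) * (a * b) / (a + b + (real n + real d) * a * b)
     = (real n - real c) / ((a + b) / (a * b) + real n + real d)" for n
    using assms by (simp add: field_simps)
  then show ?thesis using phi_lim0[of c "(a + b) / (a * b)" d] by simp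
qed

locale ab =
  fixes a b :: real
  assumes a: "a > 0" and b: "b > 0"
begin

definition Zp :: "nat \<Rightarrow> real" where "Zp n = (\<Prod>k<n. a + b + real k * a * b)"

lemma fac_pos: "a + b + real k * a * b > 0"
  using a b by (simp add: add_pos_nonneg)

lemma Zp_pos: "Zp n > 0"
  unfolding Zp_def by (rule prod_pos) (simp add: fac_pos)

lemma Zp_split: "m \<le> n \<Longrightarrow> Zp n = Zp (n - m) * (\<Prod>i<m. a + b + real (n - m + i) * a * b)"
proof (induction m)
  case 0 then show ?case by simp
next
  case (Suc m)
  then have IH: "Zp n = Zp (n - m) * (\<Prod>i<m. a + b + real (n - m + i) * a * b)" by simp
  have e: "n - m = Suc (n - Suc m)" using Suc by simp
  have "Zp (n - m) = Zp (n - Suc m) * (a + b + real (n - Suc m) * a * b)"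
    unfolding e Zp_def by simp
  moreover have "(\<Prod>i<Suc m. a + b + real (n - Suc m + i) * a * b)
     = (a + b + real (n - Suc m) * a * b) * (\<Prod>i<m. a + b + real (n - m + i) * a * b)"
    unfolding prod.lessThan_Suc_shift using e by (simp add: add.commute add.left_commute)
  ultimately show ?case using IH by (simp add: mult.assoc)
qed

definition ee :: "nat \<Rightarrow> nat \<Rightarrow> real" where
  "ee n m = real ((n - m) choose m) * (a * b) ^ m * Zp (n - m) / Zp n"

definition phi :: "nat \<Rightarrow> nat \<Rightarrow> nat \<Rightarrow> real" where
  "phi n m i = (real (n - m) - real i) * (a * b) / (a + b + real (n - m + i) * a * b)"

lemma ee_prod:
  assumes "m \<le> n"
  shows "ee n m = (\<Prod>i<m. phi n m i) / fact m"
proof -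
  have c: "real ((n - m) choose m) * fact m = (\<Prod>i<m. real (n - m) - real i)"
  proof -
    have "real ((n - m) choose m) = real (n - m) gchoose m" by (rule binomial_gbinomial)
    then show ?thesis using gbinomial_mult_fact'[of "real (n - m)" m] by (simp add: atLeast0LessThan)
  qed
  have p: "(\<Prod>i<m. phi n m i) = (\<Prod>i<m. real (n - m) - real i) * (a * b) ^ m / (\<Prod>i<m. a + b + real (n - m + i) * a * b)"
    unfolding phi_def prod_dividef prod.distrib by (simp add: power_mult_distrib)
  have z2: "(\<Prod>i<m. a + b + real (n - m + i) * a * b) > 0"
    by (rule prod_pos) (rule fac_pos)
  have z: "Zp (n - m) > 0" "(\<Prod>i<m. a + b + real (n - m + i) * a * b) > 0"
    using Zp_pos z2 by auto
  show ?thesis unfolding ee_def Zp_split[OF assms] p c[symmetric]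
    using z by (simp add: field_simps)
qed

lemma ee_bound: "0 \<le> ee n m \<and> ee n m \<le> 1 / fact m"
proof (cases "2 * m \<le> n")
  case True
  then have mn: "m \<le> n" by simp
  have ph: "0 \<le> phi n m i \<and> phi n m i \<le> 1" if "i < m" for i
  proof
    have den: "a + b + real (n - m + i) * a * b > 0" by (rule fac_pos)
    have num: "0 \<le> real (n - m) - real i" using that True by simp
    show "0 \<le> phi n m i" unfolding phi_def using den num a b by simp
    have "(real (n - m) - real i) * (a * b) \<le> real (n - m + i) * a * b" using a b by simp
    also have "\<dots> \<le> a + b + real (n - m + i) * a * b" using a b by simp
    finally show "phi n m i \<le> 1" unfolding phi_def using den by simp
  qed
  have "0 \<le> (\<Prod>i<m. phi n m i)" "(\<Prod>i<m. phi n m i) \<le> 1"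
    using ph by (auto intro!: prod_nonneg prod_le_1)
  then show ?thesis unfolding ee_prod[OF mn] by (simp add: divide_right_mono)
next
  case False
  then have "n - m < m" by simp
  then have "ee n m = 0" by (simp add: ee_def)
  then show ?thesis by simp
qed

lemma ee_lim: "(\<lambda>n. ee n m) \<longlonglongrightarrow> 1 / fact m"
proof -
  have lim: "(\<lambda>n. (\<Prod>i<m. phi n m i) / fact m) \<longlonglongrightarrow> (\<Prod>i<m. 1) / fact m"
  proof (intro tendsto_intros)
    fix i assume "i \<in> {..<m}"
    have "(\<lambda>n. (real n - real (m + i)) * (a * b) / (a + b + (real n + real i - real m) * a * b)) \<longlonglongrightarrow> 1"
    proof -
      have "(\<lambda>n. (real n - real (m + i)) * (a * b) / (a + b + (real n + real i) * a * b - real m * a * b)) \<longlonglongrightarrow> 1"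
      proof -
        have e: "(a + b + (real n + real i) * a * b - real m * a * b) = (a + b - real m * a * b) + (real n + real i) * a * b" for n
          by simp
        have lim': "(\<lambda>n. (real n - real (m + i)) * (a * b) / ((a + b - real m * a * b) + (real n + real i) * a * b)) \<longlonglongrightarrow> 1"
        proof -
          have "(real n - real (m + i)) * (a * b) / ((a + b - real m * a * b) + (real n + real i) * a * b)
             = (real n - real (m + i)) / ((a + b - real m * a * b) / (a * b) + real n + real i)" for n
          proof -
            have ab: "a * b > 0" using a b by simp
            have "(a + b - real m * a * b) + (real n + real i) * a * b = ((a + b - real m * a * b) / (a * b) + real n + real i) * (a * b)"
              using a b by (simp add: field_simps)
            then show ?thesis using a b by simp
          qed
          then show ?thesis using phi_lim0[of "m + i" "(a + b - real m * a * b) / (a * b)" i] by simp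
        qed
        show ?thesis unfolding e by (rule lim')
      qed
      then show ?thesis by (simp add: algebra_simps)
    qed
    moreover have "eventually (\<lambda>n. (real n - real (m + i)) * (a * b) / (a + b + (real n + real i - real m) * a * b) = phi n m i) sequentially"
    proof (rule eventually_sequentiallyI[of m])
      fix n assume "m \<le> n"
      then show "(real n - real (m + i)) * (a * b) / (a + b + (real n + real i - real m) * a * b) = phi n m i"
        by (simp add: phi_def of_nat_diff algebra_simps)
    qed
    ultimately show "(\<lambda>n. phi n m i) \<longlonglongrightarrow> 1" by (rule Lim_transform_eventually)
  qed simp
  moreover have "eventually (\<lambda>n. (\<Prod>i<m. phi n m i) / fact m = ee n m) sequentially"
    by (rule eventually_sequentiallyI[of m]) (simp add: ee_prod)
  ultimately show ?thesis using Lim_transform_eventually by fastforce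
qed

lemma ee_zero: "n < m \<Longrightarrow> ee n m = 0"
  by (simp add: ee_def)

lemma choose_fact: "real ((m + k) choose k) / fact (m + k) = 1 / (fact k * fact m)"
proof -
  have "fact k * fact (m + k - k) * ((m + k) choose k) = (fact (m + k) :: nat)"
    by (rule binomial_fact_lemma) simp
  then have "real (fact k * fact m * ((m + k) choose k)) = real (fact (m + k))" by simp
  then have "fact k * fact m * real ((m + k) choose k) = (fact (m + k) :: real)"
    by (simp only: of_nat_mult of_nat_fact)
  moreover have "(fact (m + k) :: real) \<noteq> 0" "(fact k :: real) \<noteq> 0" "(fact m :: real) \<noteq> 0" by auto
  ultimately show ?thesis by (simp add: field_simps)
qed

lemma summable_M: "summable (\<lambda>m. real (m choose k) / fact m)"
proof -
  have "summable (\<lambda>m. 1 / fact k * (inverse (fact m) * (1::real) ^ m))"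
    using summable_exp[of "1::real"] by (rule summable_mult)
  then have "summable (\<lambda>m. real ((m + k) choose k) / fact (m + k))"
    by (simp add: choose_fact field_simps)
  then show ?thesis by (rule summable_iff_shift[THEN iffD1])
qed

lemma b_sums: "(\<lambda>m. (-1) ^ (m + k) * real (m choose k) / fact m) sums (exp (-1) / fact k)"
proof -
  have e1: "(\<lambda>m. (-1::real) ^ m / fact m) sums exp (-1)"
    using exp_converges[of "-1::real"] by (simp add: divide_inverse mult.commute)
  have "(\<lambda>m. 1 / fact k * ((-1::real) ^ m / fact m)) sums (1 / fact k * exp (-1))"
    by (rule sums_mult[OF e1])
  moreover have "(-1) ^ (m + k + k) * real ((m + k) choose k) / fact (m + k) = 1 / fact k * ((-1::real) ^ m / fact m)" for m
  proof -
    have "(-1::real) ^ (m + k + k) = (-1) ^ m" by (simp add: power_add)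
    then show ?thesis using choose_fact[of m k] by (simp add: field_simps)
  qed
  ultimately have "(\<lambda>m. (-1) ^ (m + k + k) * real ((m + k) choose k) / fact (m + k)) sums (exp (-1) / fact k)"
    by simp
  moreover have "(\<Sum>i<k. (-1) ^ (i + k) * real (i choose k) / fact i) = (0::real)"
    by (rule sum.neutral) simp
  ultimately show ?thesis using sums_iff_shift[of "\<lambda>m. (-1) ^ (m + k) * real (m choose k) / fact m" k] by simp
qed

lemma pk_lim: "(\<lambda>n. \<Sum>m\<le>n. (-1) ^ (m + k) * real (m choose k) * ee n m) \<longlonglongrightarrow> exp (-1) / fact k"
proof -
  define f where "f m n = (-1) ^ (m + k) * real (m choose k) * ee n m" for m n
  have fin: "suminf (\<lambda>m. f m n) = (\<Sum>m\<le>n. (-1) ^ (m + k) * real (m choose k) * ee n m)" for n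
    by (subst suminf_finite[of "{..n}"]) (auto simp: f_def ee_zero)
  have T: "((\<lambda>n. suminf (\<lambda>m. f m n)) \<longlonglongrightarrow> suminf (\<lambda>m. (-1) ^ (m + k) * real (m choose k) / fact m))"
  proof (rule tannerys_theorem[where M = "\<lambda>m. real (m choose k) / fact m", THEN conjunct2, THEN conjunct2])
    fix m
    show "(\<lambda>n. f m n) \<longlonglongrightarrow> (-1) ^ (m + k) * real (m choose k) / fact m"
      unfolding f_def using tendsto_mult_left[OF ee_lim[of m], of "(-1) ^ (m + k) * real (m choose k)"]
      by simp
  next
    show "\<forall>\<^sub>F (m, n) in at_top \<times>\<^sub>F sequentially. norm (f m n) \<le> real (m choose k) / fact m"
    proof (rule always_eventually, safe)
      fix m n
      have "norm (f m n) = real (m choose k) * ee n m" using ee_bound[of n m] by (simp add: f_def abs_mult)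
      also have "\<dots> \<le> real (m choose k) * (1 / fact m)" using ee_bound[of n m] by (intro mult_left_mono) auto
      finally show "norm (f m n) \<le> real (m choose k) / fact m" by simp
    qed
  qed (auto simp: summable_M)
  then show ?thesis using b_sums[THEN sums_unique, symmetric] unfolding fin by simp
qed

end


lemma wt_pos: "a > 0 \<Longrightarrow> b > 0 \<Longrightarrow> wt a b S > 0"
  by (simp add: wt_def)

lemma Z_pos: "a > 0 \<Longrightarrow> b > 0 \<Longrightarrow> Z a b n > 0"
  unfolding Z_prod by (rule prod_pos) (simp add: add_pos_nonneg)

lemma sp_pmf:
  assumes a: "a > 0" and b: "b > 0"
  shows "pmf (staircase_pmf n a b) T = (if T \<in> staircase n then wt a b T / Z a b n else 0)"
proof -
  define f where "f S = (if S \<in> staircase n then wt a b S / (\<Sum>T\<in>staircase n. wt a b T) else 0)" for S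
  have Zp: "(\<Sum>T\<in>staircase n. wt a b T) > 0" using Z_pos[OF a b, of n] by (simp add: Z_def)
  have nn: "\<And>x. 0 \<le> f x" unfolding f_def using wt_pos[OF a b] Zp by (simp add: less_imp_le)
  have "(\<integral>\<^sup>+x. ennreal (f x) \<partial>count_space UNIV) = (\<Sum>x\<in>staircase n. ennreal (f x))"
    by (rule nn_integral_count_space') (auto simp: finite_staircase f_def)
  also have "\<dots> = ennreal (\<Sum>x\<in>staircase n. f x)" using nn by simp
  also have "(\<Sum>x\<in>staircase n. f x) = 1" unfolding f_def using Zp
    by (simp add: sum_divide_distrib[symmetric])
  finally have pr: "(\<integral>\<^sup>+x. ennreal (f x) \<partial>count_space UNIV) = 1" by simp
  have "pmf (staircase_pmf n a b) T = f T"
    unfolding staircase_pmf_def f_def[symmetric] by (rule pmf_embed_pmf[OF nn pr])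
  then show ?thesis by (simp add: f_def Z_def)
qed

lemma sp_set:
  assumes a: "a > 0" and b: "b > 0"
  shows "set_pmf (staircase_pmf n a b) = staircase n"
proof -
  have "wt a b S \<noteq> 0" for S using wt_pos[OF a b, of S] by simp
  then show ?thesis unfolding set_pmf_eq sp_pmf[OF a b] using Z_pos[OF a b, of n] by auto
qed

lemma sp_measure:
  assumes a: "a > 0" and b: "b > 0"
  shows "measure (measure_pmf (staircase_pmf n a b)) A = (\<Sum>T\<in>A \<inter> staircase n. wt a b T) / Z a b n"
proof -
  have "measure (measure_pmf (staircase_pmf n a b)) A = measure (measure_pmf (staircase_pmf n a b)) (A \<inter> staircase n)"
    using measure_Int_set_pmf[of "staircase_pmf n a b" A] sp_set[OF a b] by simp
  also have "\<dots> = (\<Sum>T\<in>A \<inter> staircase n. pmf (staircase_pmf n a b) T)"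
    by (rule measure_measure_pmf_finite) (simp add: finite_staircase)
  also have "\<dots> = (\<Sum>T\<in>A \<inter> staircase n. wt a b T / Z a b n)"
    by (rule sum.cong) (auto simp: sp_pmf[OF a b])
  finally show ?thesis by (simp add: sum_divide_distrib)
qed

lemma prob_Xk:
  assumes a: "a > 0" and b: "b > 0" and n: "n \<ge> 1"
  shows "measure (measure_pmf (staircase_pmf n a b)) (X n -` {k}) =
    (\<Sum>m\<le>n. (-1) ^ (m + k) * real (m choose k) * ab.ee a b n m)"
proof -
  interpret ab a b using a b by unfold_locales
  have e: "X n -` {k} \<inter> staircase n = {T \<in> staircase n. X n T = k}" by auto
  have Zeq: "Zp j = Z a b j" for j by (simp add: Zp_def Z_prod)
  have "measure (measure_pmf (staircase_pmf n a b)) (X n -` {k}) =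
     (\<Sum>m\<le>n. (-1::real) ^ (m + k) * real (m choose k) * real (ncnt (n-1) m) * (a * b) ^ m * Z a b (n - m)) / Z a b n"
    unfolding sp_measure[OF a b] e sum_Xk2 ..
  also have "\<dots> = (\<Sum>m\<le>n. (-1) ^ (m + k) * real (m choose k) * ab.ee a b n m)"
    unfolding sum_divide_distrib
  proof (rule sum.cong[OF refl])
    fix m
    have "ncnt (n - 1) m = (n - m) choose m" using n by (simp add: ncnt_formula)
    then show "(-1::real) ^ (m + k) * real (m choose k) * real (ncnt (n-1) m) * (a * b) ^ m * Z a b (n - m) / Z a b n
      = (-1) ^ (m + k) * real (m choose k) * ab.ee a b n m"
      by (simp add: ee_def Zeq)
  qed
  finally show ?thesis .
qed

lemma finite_K: "finite {k::nat. real k \<le> x}"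
proof (rule finite_subset[of _ "{..nat \<lceil>x\<rceil>}"])
  show "{k::nat. real k \<le> x} \<subseteq> {..nat \<lceil>x\<rceil>}"
  proof
    fix k assume "k \<in> {k::nat. real k \<le> x}"
    then have "real k \<le> real_of_int \<lceil>x\<rceil>" using le_of_int_ceiling[of x] by (simp del: le_of_int_ceiling)
    then have "int k \<le> \<lceil>x\<rceil>" by (metis of_int_le_iff of_int_of_nat_eq)
    then show "k \<in> {..nat \<lceil>x\<rceil>}" by simp
  qed
qed simp

lemma cdf_X_law:
  "cdf (X_law n a b) x = (\<Sum>k\<in>{k. real k \<le> x}. measure (measure_pmf (staircase_pmf n a b)) (X n -` {k}))"
proof -
  have "cdf (X_law n a b) x = measure (measure_pmf (staircase_pmf n a b)) ((\<lambda>S. real (X n S)) -` {..x})"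
    unfolding cdf_def2 X_law_def by (subst measure_distr) auto
  also have "\<dots> = measure (measure_pmf (map_pmf (X n) (staircase_pmf n a b))) {k. real k \<le> x}"
    by (simp add: vimage_def)
  also have "\<dots> = (\<Sum>k\<in>{k. real k \<le> x}. pmf (map_pmf (X n) (staircase_pmf n a b)) k)"
    by (rule measure_measure_pmf_finite) (rule finite_K)
  finally show ?thesis by (simp add: pmf_map)
qed

lemma cdf_pois:
  "cdf (distr (measure_pmf (poisson_pmf 1)) borel (\<lambda>k. real k)) x = (\<Sum>k\<in>{k. real k \<le> x}. exp (-1) / fact k)"
proof -
  have "cdf (distr (measure_pmf (poisson_pmf 1)) borel (\<lambda>k. real k)) x = measure (measure_pmf (poisson_pmf 1)) {k. real k \<le> x}"
    unfolding cdf_def2 by (subst measure_distr) (auto simp: vimage_def)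
  also have "\<dots> = (\<Sum>k\<in>{k. real k \<le> x}. pmf (poisson_pmf 1) k)"
    by (rule measure_measure_pmf_finite) (rule finite_K)
  finally show ?thesis by simp
qed

theorem theorem3p9:
  fixes \<alpha> \<beta> :: real
  assumes "\<alpha> > 0" and "\<beta> > 0"
  shows "weak_conv_m (\<lambda>n. X_law n \<alpha> \<beta>)
           (distr (measure_pmf (poisson_pmf 1)) borel (\<lambda>k. real k))"
  unfolding weak_conv_m_def weak_conv_def
proof (intro allI impI)
  fix x :: real
  interpret ab \<alpha> \<beta> using assms by unfold_locales
  have "(\<lambda>n. measure (measure_pmf (staircase_pmf n \<alpha> \<beta>)) (X n -` {k})) \<longlonglongrightarrow> exp (-1) / fact k" for k
  proof (rule Lim_transform_eventually[OF pk_lim[of k]])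
    show "\<forall>\<^sub>F n in sequentially. (\<Sum>m\<le>n. (-1) ^ (m + k) * real (m choose k) * ee n m) =
        measure (measure_pmf (staircase_pmf n \<alpha> \<beta>)) (X n -` {k})"
      by (rule eventually_sequentiallyI[of 1]) (simp add: prob_Xk[OF assms])
  qed
  then have "(\<lambda>n. \<Sum>k\<in>{k. real k \<le> x}. measure (measure_pmf (staircase_pmf n \<alpha> \<beta>)) (X n -` {k}))
     \<longlonglongrightarrow> (\<Sum>k\<in>{k. real k \<le> x}. exp (-1) / fact k)"
    by (intro tendsto_sum) auto
  then show "(\<lambda>n. cdf (X_law n \<alpha> \<beta>) x) \<longlonglongrightarrow> cdf (distr (measure_pmf (poisson_pmf 1)) borel real) x"
    unfolding cdf_X_law cdf_pois .
qed


end
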